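(* Let $\{p_k\}_{k\ge0}$ be an offspring distribution with $p_0>0$, mean $\mu>1$, probability generating function $f$ and extinction probability $q$, and let $\beta\in(\mu^{-1},f'(q)^{-1/2})$. Let $h(s):=f(qs)/q$, let $\mathcal{T}^h$ be a Galton–Watson tree with offspring generating function $h$ and root $\rho$, and let $\overline{\mathcal{T}}^h$ be the tree obtained by attaching an extra vertex $\overline{\rho}$ as the parent of $\rho$ (with $\overline{\rho}$ as the new root). Then \[\mathbf{E}\Big[E^{\overline{\mathcal{T}}^h}_{\overline{\rho}}\big[(\tau^+_{\overline{\rho}})^2\big]\Big]<\infty,\] where $\tau^+_{\overline{\rho}}:=\inf\{k>0: X_k=\overline{\rho}\}$ and $\mathbf{E}$ is expectation over the law of $\mathcal{T}^h$.
   Context: For a fixed rooted tree with root $r$, the $\beta$-biased random walk $(X_n)$ started at $z$, with law $P_z$ (and expectation $E_z$), is the Markov chain which from a vertex $x\neq r$ moves to its parent with probability $1/(1+\beta|c(x)|)$ and to each child with probability $\beta/(1+\beta|c(x)|)$ (here $c(x)$ is the set of children of $x$), and from the root $r$ moves to each child with probability $1/|c(r)|$. Here the root is $\overline{\rho}$, which has the single child $\rho$. *)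

theory Defs
  imports "HOL-Probability.Probability"
begin

definition pgf :: "nat pmf \<Rightarrow> real \<Rightarrow> real" where
  "pgf P s = (\<Sum>k. pmf P k * s ^ k)"

text \<open>Mean of the offspring distribution (assumed finite where used).\<close>
definition offspring_mean :: "nat pmf \<Rightarrow> real" where
  "offspring_mean P = (\<Sum>k. real k * pmf P k)"

text \<open>A Galton--Watson tree is encoded by an i.i.d. family N of offspring numbers indexed
  by Ulam--Harris labels (nat lists).  The root rho is the empty list; the children of a
  vertex u are u @ [i] for i < N u.\<close>

definition gw_measure :: "nat pmf \<Rightarrow> (nat list \<Rightarrow> nat) measure" where
  "gw_measure P = PiM UNIV (\<lambda>_. measure_pmf P)"

definition gw_tree :: "(nat list \<Rightarrow> nat) \<Rightarrow> nat list set" where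
  "gw_tree N = {u. \<forall>j < length u. u ! j < N (take j u)}"

definition extinction_prob :: "nat pmf \<Rightarrow> real" where
  "extinction_prob P = measure (gw_measure P) {N. finite (gw_tree N)}"

text \<open>The vertex set of the augmented tree is {rho-bar} together with the vertices of
  gw_tree N; rho-bar is the new root with single child rho = []; the parent of [] is rho-bar
  and the parent of a nonempty u is butlast u.
  first_hit beta N n u is the probability, under P_u for the beta-biased walk, that
  the walk started at the tree vertex u hits rho-bar for the first time at time n.\<close>

fun first_hit :: "real \<Rightarrow> (nat list \<Rightarrow> nat) \<Rightarrow> nat \<Rightarrow> nat list \<Rightarrow> real" where
  "first_hit \<beta> N 0 u = 0"
| "first_hit \<beta> N (Suc n) u =
     (1 / (1 + \<beta> * real (N u))) *
       (if u = [] then (if n = 0 then 1 else 0) else first_hit \<beta> N n (butlast u))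
     + (\<Sum>i<N u. (\<beta> / (1 + \<beta> * real (N u))) * first_hit \<beta> N n (u @ [i]))"

text \<open>Since from rho-bar the walk moves to rho with probability 1,
  P_{rho-bar}(tau^+ = m + 1) = first_hit beta N m [].  The second moment of tau^+ under
  P_{rho-bar}, as an extended nonnegative real (infinite if tau^+ = infinity with positive
  probability).\<close>

definition return_time_second_moment :: "real \<Rightarrow> (nat list \<Rightarrow> nat) \<Rightarrow> ennreal" where
  "return_time_second_moment \<beta> N =
     (\<Sum>m. ennreal ((real m + 1) ^ 2 * first_hit \<beta> N m []))
     + (if (\<Sum>m. ennreal (first_hit \<beta> N m [])) < 1 then \<top> else 0)"

end

theory Submission
  imports Defs
begin

definition shft :: "nat \<Rightarrow> (nat list \<Rightarrow> nat) \<Rightarrow> (nat list \<Rightarrow> nat)" where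
  "shft i N = (\<lambda>v. N (i # v))"

lemma space_gw[simp]: "space (gw_measure R) = UNIV"
  unfolding gw_measure_def by (simp add: space_PiM PiE_UNIV_domain)


lemma comp_cs: "x \<in> I \<Longrightarrow> (\<lambda>\<omega>. \<omega> x) \<in> PiM I (\<lambda>_. measure_pmf R) \<rightarrow>\<^sub>M count_space UNIV"
  using measurable_component_singleton[of x I "\<lambda>_. measure_pmf R"]
  by (subst measurable_cong_sets[OF refl sets_measure_pmf_count_space[symmetric]])

lemma shft_eq: "shft i = (\<lambda>\<omega> n. \<omega> (i # n))" by (simp add: fun_eq_iff shft_def)

lemma prob_gw: "prob_space (gw_measure R)"
  unfolding gw_measure_def by (intro prob_space_PiM) (simp add: measure_pmf.prob_space_axioms)

lemma meas_coord[measurable]: "(\<lambda>N. N u) \<in> gw_measure R \<rightarrow>\<^sub>M measure_pmf R"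
  unfolding gw_measure_def by (rule measurable_component_singleton) simp

lemma meas_coord_cs[measurable]: "(\<lambda>N. N u) \<in> gw_measure R \<rightarrow>\<^sub>M count_space UNIV"
  using meas_coord[of u R] by (subst measurable_cong_sets[OF refl sets_measure_pmf_count_space[symmetric]])

lemma meas_coord_fun[measurable]: "(\<lambda>N. h (N u)) \<in> gw_measure R \<rightarrow>\<^sub>M (borel :: 'b::topological_space measure)"
  by (rule measurable_compose[OF meas_coord]) (simp add: measurable_pmf_measure1)

lemma meas_shift[measurable]: "shft i \<in> gw_measure R \<rightarrow>\<^sub>M gw_measure R"
proof -
  have "(\<lambda>N v. N (i # v)) \<in> gw_measure R \<rightarrow>\<^sub>M gw_measure R"
    unfolding gw_measure_def
    by (rule measurable_PiM_single') (auto intro: comp_cs simp: space_PiM PiE_UNIV_domain)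
  then show ?thesis unfolding shft_def[abs_def] .
qed

lemma distr_shift: "distr (gw_measure R) (gw_measure R) (shft i) = gw_measure R"
proof -
  have "distr (PiM UNIV (\<lambda>_. measure_pmf R)) (PiM UNIV (\<lambda>n. (\<lambda>_. measure_pmf R) (Cons i n))) (\<lambda>\<omega>. \<lambda>n\<in>UNIV. \<omega> (Cons i n))
      = PiM UNIV (\<lambda>n. (\<lambda>_. measure_pmf R) (Cons i n))"
    by (rule distr_PiM_reindex) (auto simp: measure_pmf.prob_space_axioms)
  then show ?thesis unfolding gw_measure_def shft_def[abs_def] by (simp add: restrict_UNIV)
qed

lemma distr_coord: "distr (gw_measure R) (measure_pmf R) (\<lambda>N. N u) = measure_pmf R"
  unfolding gw_measure_def by (rule distr_PiM_component) (auto simp: measure_pmf.prob_space_axioms)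

lemma nn_integral_shift:
  assumes "G \<in> borel_measurable (gw_measure R)"
  shows "(\<integral>\<^sup>+N. G (shft i N) \<partial>gw_measure R) = (\<integral>\<^sup>+N. G N \<partial>gw_measure R)"
proof -
  have "(\<integral>\<^sup>+N. G N \<partial>gw_measure R) = (\<integral>\<^sup>+N. G N \<partial>distr (gw_measure R) (gw_measure R) (shft i))"
    by (simp add: distr_shift)
  also have "\<dots> = (\<integral>\<^sup>+N. G (shft i N) \<partial>gw_measure R)"
    using assms by (subst nn_integral_distr) auto
  finally show ?thesis by simp
qed

lemma nn_integral_coord:
  "(\<integral>\<^sup>+N. h (N u) \<partial>gw_measure R) = (\<integral>\<^sup>+k. h k \<partial>measure_pmf R)"
proof -
  have "(\<integral>\<^sup>+k. h k \<partial>measure_pmf R) = (\<integral>\<^sup>+k. h k \<partial>distr (gw_measure R) (measure_pmf R) (\<lambda>N. N u))"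
    by (simp add: distr_coord)
  also have "\<dots> = (\<integral>\<^sup>+N. h (N u) \<partial>gw_measure R)"
    by (subst nn_integral_distr) (auto simp: measurable_pmf_measure1)
  finally show ?thesis by simp
qed

lemma gw_indep:
  fixes h :: "nat \<Rightarrow> ennreal" and G :: "nat \<Rightarrow> (nat list \<Rightarrow> nat) \<Rightarrow> ennreal"
  assumes G: "\<And>i. G i \<in> borel_measurable (gw_measure R)"
  shows "prob_space.indep_vars (gw_measure R) (\<lambda>_. borel)
     (\<lambda>j N. case j of None \<Rightarrow> h (N []) | Some i \<Rightarrow> G i (shft i N)) UNIV"
proof -
  interpret prob_space "gw_measure R" by (rule prob_gw)
  have coord: "indep_vars (\<lambda>_. measure_pmf R) (\<lambda>u N. N u) UNIV"
  proof (subst indep_vars_iff_distr_eq_PiM)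
    show "distr (gw_measure R) (PiM UNIV (\<lambda>_. measure_pmf R)) (\<lambda>x. \<lambda>i\<in>UNIV. x i) = PiM UNIV (\<lambda>i. distr (gw_measure R) (measure_pmf R) (\<lambda>x. x i))"
      by (simp add: distr_coord restrict_UNIV) (simp add: gw_measure_def distr_id)
  qed auto
  define K where "K = (\<lambda>j::nat option. case j of None \<Rightarrow> {[]::nat list} | Some i \<Rightarrow> range (Cons i))"
  have disj: "disjoint_family_on K UNIV"
    unfolding disjoint_family_on_def K_def by (auto split: option.splits)
  have r: "indep_vars (\<lambda>j. PiM (K j) (\<lambda>_. measure_pmf R)) (\<lambda>j \<omega>. restrict (\<lambda>u. \<omega> u) (K j)) UNIV"
    by (rule indep_vars_restrict[OF coord]) (auto simp: disj)
  define Y where "Y = (\<lambda>j x. case j of None \<Rightarrow> h (x []) | Some i \<Rightarrow> G i (\<lambda>v. x (i # v)))"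
  have Ymeas: "Y j \<in> borel_measurable (PiM (K j) (\<lambda>_. measure_pmf R))" for j
  proof (cases j)
    case None
    have "(\<lambda>x. x []) \<in> PiM (K j) (\<lambda>_. measure_pmf R) \<rightarrow>\<^sub>M measure_pmf R"
      using None by (intro measurable_component_singleton) (simp add: K_def)
    then show ?thesis using None unfolding Y_def
      by (auto intro: measurable_compose simp: measurable_pmf_measure1)
  next
    case (Some i)
    have "(\<lambda>x v. x (i # v)) \<in> PiM (K j) (\<lambda>_. measure_pmf R) \<rightarrow>\<^sub>M gw_measure R"
      unfolding gw_measure_def using Some
      by (intro measurable_PiM_single') (auto intro!: comp_cs simp: K_def space_PiM PiE_UNIV_domain)
    then show ?thesis using Some G unfolding Y_def by (auto intro: measurable_compose)
  qed
  have "indep_vars (\<lambda>_. borel) (\<lambda>j \<omega>. Y j (restrict (\<lambda>u. \<omega> u) (K j))) UNIV"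
    by (rule indep_vars_compose2[OF r]) (rule Ymeas)
  moreover have "(\<lambda>j \<omega>. Y j (restrict (\<lambda>u. \<omega> u) (K j))) = (\<lambda>j N. case j of None \<Rightarrow> h (N []) | Some i \<Rightarrow> G i (shft i N))"
    by (auto simp: fun_eq_iff Y_def K_def shft_def split: option.splits)
  ultimately show ?thesis by simp
qed


lemma indep_prod:
  fixes h :: "nat \<Rightarrow> ennreal" and G :: "nat \<Rightarrow> (nat list \<Rightarrow> nat) \<Rightarrow> ennreal"
  assumes G: "\<And>i. G i \<in> borel_measurable (gw_measure R)" and F: "finite F"
  shows "(\<integral>\<^sup>+N. h (N []) * (\<Prod>i\<in>F. G i (shft i N)) \<partial>gw_measure R)
     = (\<integral>\<^sup>+k. h k \<partial>measure_pmf R) * (\<Prod>i\<in>F. \<integral>\<^sup>+N. G i N \<partial>gw_measure R)"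
proof -
  interpret prob_space "gw_measure R" by (rule prob_gw)
  define X where "X = (\<lambda>j N. case j of None \<Rightarrow> h (N []) | Some i \<Rightarrow> G i (shft i N))"
  define I where "I = insert None (Some ` F)"
  have ind: "indep_vars (\<lambda>_. borel) X I"
    unfolding X_def by (rule indep_vars_subset[OF gw_indep[OF G]]) simp
  have fin: "finite I" using F by (simp add: I_def)
  have pe: "\<And>f :: nat option \<Rightarrow> ennreal. (\<Prod>j\<in>I. f j) = f None * (\<Prod>i\<in>F. f (Some i))"
    unfolding I_def using F by (simp add: prod.reindex)
  have "(\<integral>\<^sup>+N. (\<Prod>j\<in>I. X j N) \<partial>gw_measure R) = (\<Prod>j\<in>I. \<integral>\<^sup>+N. X j N \<partial>gw_measure R)"
    by (rule indep_vars_nn_integral[OF fin ind]) simp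
  then show ?thesis
    unfolding pe by (simp add: X_def nn_integral_coord nn_integral_shift[OF G])
qed

definition csum :: "((nat list \<Rightarrow> nat) \<Rightarrow> ennreal) \<Rightarrow> (nat list \<Rightarrow> nat) \<Rightarrow> ennreal" where
  "csum G N = (\<Sum>i<N []. G (shft i N))"

lemma csum_suminf: "csum G N = (\<Sum>i. of_bool (i < N []) * G (shft i N))"
  by (subst suminf_finite[of "{..<N []}"]) (auto simp: csum_def intro!: sum.cong)

lemma meas_csum[measurable]:
  assumes [measurable]: "G \<in> borel_measurable (gw_measure R)"
  shows "csum G \<in> borel_measurable (gw_measure R)"
proof -
  have "(\<lambda>N. \<Sum>i. of_bool (i < N []) * G (shft i N)) \<in> borel_measurable (gw_measure R)"
    by measurable
  then show ?thesis by (simp add: csum_suminf[abs_def])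
qed

definition mR :: "nat pmf \<Rightarrow> ennreal" where "mR R = (\<integral>\<^sup>+k. of_nat k \<partial>measure_pmf R)"
definition vR :: "nat pmf \<Rightarrow> ennreal" where "vR R = (\<integral>\<^sup>+k. of_nat (k * (k - 1)) \<partial>measure_pmf R)"

lemma suminf_of_bool_less: "(\<Sum>i. of_bool (i < k) :: ennreal) = of_nat k"
  by (subst suminf_finite[of "{..<k}"]) auto

lemma nn_integral_csum:
  assumes G[measurable]: "G \<in> borel_measurable (gw_measure R)"
  shows "(\<integral>\<^sup>+N. csum G N \<partial>gw_measure R) = mR R * (\<integral>\<^sup>+N. G N \<partial>gw_measure R)"
proof -
  have "(\<integral>\<^sup>+N. csum G N \<partial>gw_measure R) = (\<Sum>i. \<integral>\<^sup>+N. of_bool (i < N []) * G (shft i N) \<partial>gw_measure R)"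
    unfolding csum_suminf by (rule nn_integral_suminf) measurable
  also have "\<dots> = (\<Sum>i. (\<integral>\<^sup>+k. of_bool (i < k) \<partial>measure_pmf R) * (\<integral>\<^sup>+N. G N \<partial>gw_measure R))"
    using indep_prod[of "\<lambda>_. G" R "{i}" "\<lambda>k. of_bool (i < k)" for i] by simp
  also have "\<dots> = (\<Sum>i. \<integral>\<^sup>+k. of_bool (i < k) \<partial>measure_pmf R) * (\<integral>\<^sup>+N. G N \<partial>gw_measure R)"
    by (simp add: ennreal_suminf_cmult mult.commute)
  also have "(\<Sum>i. \<integral>\<^sup>+k. of_bool (i < k) \<partial>measure_pmf R) = mR R"
    unfolding mR_def by (subst nn_integral_suminf[symmetric]) (auto simp: suminf_of_bool_less)
  finally show ?thesis .
qed


lemma suminf_single_ennreal: "(\<Sum>j. of_bool (j = i) * (a::ennreal)) = a"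
  by (subst suminf_finite[of "{i}"]) auto

lemma suminf_single1: "(\<Sum>j. of_bool (j = i) :: ennreal) = 1"
  by (subst suminf_finite[of "{i}"]) auto

lemma count_pairs: "(\<Sum>i. \<Sum>j. of_bool (j \<noteq> i \<and> i < k \<and> j < k) :: ennreal) = of_nat (k * (k - 1))"
proof -
  have inner: "(\<Sum>j. of_bool (j \<noteq> i \<and> i < k \<and> j < k) :: ennreal) = of_bool (i < k) * of_nat (k - 1)" for i
  proof (cases "i < k")
    case True
    have "(\<Sum>j. of_bool (j \<noteq> i \<and> i < k \<and> j < k) :: ennreal) = (\<Sum>j\<in>{..<k} - {i}. 1)"
      using True by (subst suminf_finite[of "{..<k} - {i}"]) (auto intro!: sum.cong)
    also have "\<dots> = of_nat (k - 1)" using True by simp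
    finally show ?thesis using True by simp
  next
    case False
    then have "(\<lambda>j. of_bool (j \<noteq> i \<and> i < k \<and> j < k) :: ennreal) = (\<lambda>j. 0)" by auto
    then show ?thesis using False by simp
  qed
  have "(\<Sum>i. of_bool (i < k) * (of_nat (k - 1) :: ennreal)) = (\<Sum>i. of_bool (i < k)) * of_nat (k - 1)"
    by (rule ennreal_suminf_multc)
  then have "(\<Sum>i. of_bool (i < k) * (of_nat (k - 1) :: ennreal)) = of_nat k * of_nat (k - 1)"
    by (simp only: suminf_of_bool_less)
  then show ?thesis unfolding inner by (simp add: of_nat_mult)
qed

lemma nn_integral_csum_sq:
  assumes G[measurable]: "G \<in> borel_measurable (gw_measure R)"
  shows "(\<integral>\<^sup>+N. (csum G N)^2 \<partial>gw_measure R) = mR R * (\<integral>\<^sup>+N. (G N)^2 \<partial>gw_measure R) + vR R * (\<integral>\<^sup>+N. G N \<partial>gw_measure R)^2"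
proof -
  define b where "b = (\<lambda>i N. of_bool (i < N []) * G (shft i N))"
  have bm[measurable]: "b i \<in> borel_measurable (gw_measure R)" for i unfolding b_def by measurable
  have sq: "(csum G N)^2 = (\<Sum>i. \<Sum>j. b i N * b j N)" for N
  proof -
    have e: "csum G N = (\<Sum>i. b i N)" unfolding csum_suminf b_def ..
    have "(\<Sum>i. b i N) * (\<Sum>j. b j N) = (\<Sum>i. b i N * (\<Sum>j. b j N))"
      by (rule ennreal_suminf_multc[symmetric])
    also have "\<dots> = (\<Sum>i. \<Sum>j. b i N * b j N)"
      by (simp only: ennreal_suminf_cmult)
    finally show ?thesis unfolding e power2_eq_square .
  qed
  define E1 where "E1 = (\<integral>\<^sup>+N. G N \<partial>gw_measure R)"
  define E2 where "E2 = (\<integral>\<^sup>+N. (G N)^2 \<partial>gw_measure R)"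
  define P where "P = (\<lambda>i j. \<integral>\<^sup>+k. of_bool (i < k \<and> j < k) \<partial>measure_pmf R)"
  have cij: "(\<integral>\<^sup>+N. b i N * b j N \<partial>gw_measure R) = of_bool (j = i) * (P i i * E2) + of_bool (j \<noteq> i) * (P i j * E1^2)" for i j
  proof (cases "j = i")
    case True
    have "(\<integral>\<^sup>+N. b i N * b j N \<partial>gw_measure R) = (\<integral>\<^sup>+N. of_bool (i < N [] \<and> i < N []) * (\<Prod>l\<in>{i}. (G (shft l N))^2) \<partial>gw_measure R)"
      using True by (intro nn_integral_cong) (simp add: b_def power2_eq_square)
    also have "\<dots> = P i i * E2"
      by (subst indep_prod[where G="\<lambda>_ N. (G N)^2"]) (auto simp: P_def E2_def)
    finally show ?thesis using True by simp
  next
    case False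
    have "(\<integral>\<^sup>+N. b i N * b j N \<partial>gw_measure R) = (\<integral>\<^sup>+N. of_bool (i < N [] \<and> j < N []) * (\<Prod>l\<in>{i,j}. G (shft l N)) \<partial>gw_measure R)"
      using False by (intro nn_integral_cong) (simp add: b_def mult_ac)
    also have "\<dots> = P i j * E1^2"
      using False by (subst indep_prod[where G="\<lambda>_. G"]) (auto simp: P_def E1_def power2_eq_square)
    finally show ?thesis using False by simp
  qed
  have "(\<integral>\<^sup>+N. (csum G N)^2 \<partial>gw_measure R) = (\<Sum>i. \<integral>\<^sup>+N. (\<Sum>j. b i N * b j N) \<partial>gw_measure R)"
    unfolding sq by (rule nn_integral_suminf) measurable
  also have "\<dots> = (\<Sum>i. \<Sum>j. \<integral>\<^sup>+N. b i N * b j N \<partial>gw_measure R)"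
    by (intro suminf_cong nn_integral_suminf) measurable
  also have "\<dots> = (\<Sum>i. P i i * E2 + (\<Sum>j. of_bool (j \<noteq> i) * (P i j * E1^2)))"
    unfolding cij by (intro suminf_cong) (simp add: suminf_add[symmetric] suminf_single_ennreal suminf_single1 ennreal_suminf_multc)
  also have "\<dots> = (\<Sum>i. P i i * E2) + (\<Sum>i. \<Sum>j. of_bool (j \<noteq> i) * P i j * E1^2)"
    by (subst suminf_add) (auto simp: mult.assoc)
  also have "\<dots> = (\<Sum>i. P i i) * E2 + (\<Sum>i. \<Sum>j. of_bool (j \<noteq> i) * P i j) * E1^2"
    by (simp only: ennreal_suminf_multc)
  also have "(\<Sum>i. P i i) = mR R"
    unfolding P_def mR_def by (subst nn_integral_suminf[symmetric]) (auto simp: suminf_of_bool_less)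
  also have "(\<Sum>i. \<Sum>j. of_bool (j \<noteq> i) * P i j) = vR R"
  proof -
    have "(\<Sum>i. \<Sum>j. of_bool (j \<noteq> i) * P i j) = (\<Sum>i. \<Sum>j. \<integral>\<^sup>+k. of_bool (j \<noteq> i \<and> i < k \<and> j < k) \<partial>measure_pmf R)"
      unfolding P_def by (intro suminf_cong) (auto simp: nn_integral_cmult[symmetric] intro!: nn_integral_cong)
    also have "\<dots> = (\<Sum>i. \<integral>\<^sup>+k. (\<Sum>j. of_bool (j \<noteq> i \<and> i < k \<and> j < k)) \<partial>measure_pmf R)"
      by (intro suminf_cong nn_integral_suminf[symmetric]) auto
    also have "\<dots> = (\<integral>\<^sup>+k. (\<Sum>i. \<Sum>j. of_bool (j \<noteq> i \<and> i < k \<and> j < k)) \<partial>measure_pmf R)"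
      by (intro nn_integral_suminf[symmetric]) auto
    also have "\<dots> = vR R" unfolding vR_def count_pairs ..
    finally show ?thesis .
  qed
  finally show ?thesis by (simp add: E1_def E2_def)
qed

definition ET :: "real \<Rightarrow> (nat list \<Rightarrow> nat) \<Rightarrow> (nat \<Rightarrow> real) \<Rightarrow> nat \<Rightarrow> nat list \<Rightarrow> real" where
  "ET \<beta> N \<phi> T u = (\<Sum>n\<le>T. \<phi> n * first_hit \<beta> N n u) + \<phi> T * (1 - (\<Sum>n\<le>T. first_hit \<beta> N n u))"

definition pu :: "real \<Rightarrow> (nat list \<Rightarrow> nat) \<Rightarrow> nat list \<Rightarrow> real" where
  "pu \<beta> N u = 1 / (1 + \<beta> * real (N u))"
definition cu :: "real \<Rightarrow> (nat list \<Rightarrow> nat) \<Rightarrow> nat list \<Rightarrow> real" where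
  "cu \<beta> N u = \<beta> / (1 + \<beta> * real (N u))"

definition eu :: "real \<Rightarrow> (nat list \<Rightarrow> nat) \<Rightarrow> nat \<Rightarrow> nat list \<Rightarrow> real" where
  "eu \<beta> N n u = (if u = [] then (if n = 0 then 1 else 0) else first_hit \<beta> N n (butlast u))"

lemma fh_Suc: "first_hit \<beta> N (Suc n) u = pu \<beta> N u * eu \<beta> N n u + cu \<beta> N u * (\<Sum>i<N u. first_hit \<beta> N n (u @ [i]))"
  by (simp add: pu_def cu_def eu_def sum_distrib_left)

declare first_hit.simps(2)[simp del]

lemma pc_sum: "\<beta> \<ge> 0 \<Longrightarrow> pu \<beta> N u + cu \<beta> N u * real (N u) = 1"
proof -
  assume b: "\<beta> \<ge> 0"
  have "1 + \<beta> * real (N u) > 0" using b by (simp add: add_pos_nonneg)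
  then show ?thesis unfolding pu_def cu_def by (simp add: field_simps)
qed

lemma pc_nonneg: "\<beta> \<ge> 0 \<Longrightarrow> pu \<beta> N u \<ge> 0 \<and> cu \<beta> N u \<ge> 0"
  unfolding pu_def cu_def by (simp add: add_pos_nonneg)

lemma fh_nonneg: "\<beta> \<ge> 0 \<Longrightarrow> first_hit \<beta> N n u \<ge> 0"
proof (induction n arbitrary: u)
  case 0 then show ?case by simp
next
  case (Suc n)
  have "eu \<beta> N n u \<ge> 0" using Suc by (simp add: eu_def)
  then show ?case using Suc pc_nonneg[OF Suc.prems, of N u]
    by (simp only: fh_Suc) (intro add_nonneg_nonneg mult_nonneg_nonneg sum_nonneg; auto)
qed

lemma sum_shift_atMost: "(\<Sum>n\<le>Suc T. f n) = f 0 + (\<Sum>n\<le>T. f (Suc n))"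
  by (rule sum.atMost_Suc_shift)

lemma fh_sum_le1: "\<beta> \<ge> 0 \<Longrightarrow> (\<Sum>n\<le>T. first_hit \<beta> N n u) \<le> 1"
proof (induction T arbitrary: u)
  case 0 then show ?case by simp
next
  case (Suc T)
  have e: "(\<Sum>n\<le>T. eu \<beta> N n u) \<le> 1"
  proof (cases "u = []")
    case True
    have "(\<Sum>n\<le>T. eu \<beta> N n u) = (\<Sum>n\<le>T. (if n = 0 then 1 else 0))" using True by (simp add: eu_def)
    also have "\<dots> = 1" by (simp add: sum.delta)
    finally show ?thesis by simp
  next
    case False then show ?thesis using Suc by (simp add: eu_def)
  qed
  have "(\<Sum>n\<le>Suc T. first_hit \<beta> N n u) = (\<Sum>n\<le>T. first_hit \<beta> N (Suc n) u)"
    by (subst sum_shift_atMost) simp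
  also have "\<dots> = pu \<beta> N u * (\<Sum>n\<le>T. eu \<beta> N n u) + cu \<beta> N u * (\<Sum>i<N u. \<Sum>n\<le>T. first_hit \<beta> N n (u @ [i]))"
    by (simp add: fh_Suc sum.distrib sum_distrib_left sum.swap[of _ "{..<N u}"])
  also have "\<dots> \<le> pu \<beta> N u * 1 + cu \<beta> N u * (\<Sum>i<N u. 1)"
    using pc_nonneg[OF Suc.prems, of N u] Suc e
    by (intro add_mono mult_left_mono sum_mono) auto
  also have "\<dots> = 1" using pc_sum[OF Suc.prems, of N u] by simp
  finally show ?case .
qed

lemma ET_Suc:
  assumes b: "\<beta> \<ge> 0"
  shows "ET \<beta> N \<phi> (Suc T) u = pu \<beta> N u * (if u = [] then \<phi> 1 else ET \<beta> N (\<phi> \<circ> Suc) T (butlast u))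
     + cu \<beta> N u * (\<Sum>i<N u. ET \<beta> N (\<phi> \<circ> Suc) T (u @ [i]))"
proof -
  define p where "p = pu \<beta> N u"
  define c where "c = cu \<beta> N u"
  define X where "X = (\<Sum>n\<le>T. \<phi> (Suc n) * eu \<beta> N n u)"
  define E where "E = (\<Sum>n\<le>T. eu \<beta> N n u)"
  define Y where "Y = (\<lambda>i. \<Sum>n\<le>T. \<phi> (Suc n) * first_hit \<beta> N n (u @ [i]))"
  define Z where "Z = (\<lambda>i. \<Sum>n\<le>T. first_hit \<beta> N n (u @ [i]))"
  have 1: "(\<Sum>n\<le>Suc T. \<phi> n * first_hit \<beta> N n u) = p * X + c * (\<Sum>i<N u. Y i)"
    by (subst sum_shift_atMost, simp add: fh_Suc sum.distrib sum_distrib_left sum.swap[of _ "{..<N u}"]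
        p_def c_def X_def Y_def algebra_simps)
  have 2: "(\<Sum>n\<le>Suc T. first_hit \<beta> N n u) = p * E + c * (\<Sum>i<N u. Z i)"
    by (subst sum_shift_atMost, simp add: fh_Suc sum.distrib sum_distrib_left sum.swap[of _ "{..<N u}"]
        p_def c_def E_def Z_def algebra_simps)
  have pc: "p + c * real (N u) = 1" using pc_sum[OF b] by (simp add: p_def c_def)
  have "ET \<beta> N \<phi> (Suc T) u = p * X + c * (\<Sum>i<N u. Y i) + \<phi> (Suc T) * (p + c * (\<Sum>i<N u. 1) - (p * E + c * (\<Sum>i<N u. Z i)))"
    unfolding ET_def 1 2 using pc by simp
  also have "\<dots> = p * (X + \<phi> (Suc T) * (1 - E)) + c * (\<Sum>i<N u. Y i + \<phi> (Suc T) * (1 - Z i))"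
    by (simp add: algebra_simps sum.distrib sum_distrib_left sum_subtractf)
  also have "X + \<phi> (Suc T) * (1 - E) = (if u = [] then \<phi> 1 else ET \<beta> N (\<phi> \<circ> Suc) T (butlast u))"
  proof (cases "u = []")
    case True
    have "X = (\<Sum>n\<le>T. (if n = 0 then \<phi> (Suc n) else 0))" using True
      unfolding X_def by (intro sum.cong) (auto simp: eu_def)
    then have X: "X = \<phi> 1" by (simp add: sum.delta)
    have E: "E = 1" using True by (simp add: E_def eu_def sum.delta)
    show ?thesis using True X E by simp
  next
    case False then show ?thesis by (simp add: X_def E_def eu_def ET_def)
  qed
  also have "(\<Sum>i<N u. Y i + \<phi> (Suc T) * (1 - Z i)) = (\<Sum>i<N u. ET \<beta> N (\<phi> \<circ> Suc) T (u @ [i]))"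
    by (simp add: Y_def Z_def ET_def)
  finally show ?thesis by (simp add: p_def c_def)
qed

lemma ET_add: "ET \<beta> N (\<lambda>n. \<phi> n + \<psi> n) T u = ET \<beta> N \<phi> T u + ET \<beta> N \<psi> T u"
  unfolding ET_def by (simp add: algebra_simps sum.distrib)
lemma ET_mult: "ET \<beta> N (\<lambda>n. a * \<phi> n) T u = a * ET \<beta> N \<phi> T u"
  unfolding ET_def by (simp add: algebra_simps sum_distrib_left)
lemma ET_one: "ET \<beta> N (\<lambda>n. 1) T u = 1"
  unfolding ET_def by simp

lemma gw_tree_snoc: "u @ [i] \<in> gw_tree N \<longleftrightarrow> u \<in> gw_tree N \<and> i < N u"
  unfolding gw_tree_def by (auto simp: nth_append less_Suc_eq)

lemma gw_tree_Nil: "[] \<in> gw_tree N"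
  unfolding gw_tree_def by simp

lemma gw_tree_butlast: "u \<in> gw_tree N \<Longrightarrow> u \<noteq> [] \<Longrightarrow> butlast u \<in> gw_tree N"
  using gw_tree_snoc[of "butlast u" "last u" N] by simp

definition anc :: "(nat list \<Rightarrow> real) \<Rightarrow> nat list \<Rightarrow> real" where
  "anc f u = (\<Sum>j\<le>length u. f (take j u))"

lemma anc_snoc: "anc f (u @ [i]) = anc f u + f (u @ [i])"
proof -
  have "anc f (u @ [i]) = (\<Sum>j\<le>length u. f (take j (u @ [i]))) + f (u @ [i])"
    unfolding anc_def by simp
  also have "(\<Sum>j\<le>length u. f (take j (u @ [i]))) = anc f u"
    unfolding anc_def by (intro sum.cong) auto
  finally show ?thesis .
qed

lemma anc_Nil: "anc f [] = f []" unfolding anc_def by simp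

lemma anc_butlast: "u \<noteq> [] \<Longrightarrow> anc f (butlast u) = anc f u - f u"
  using anc_snoc[of f "butlast u" "last u"] by simp

lemma anc_nonneg: "(\<And>v. v \<in> gw_tree N \<Longrightarrow> f v \<ge> 0) \<Longrightarrow> u \<in> gw_tree N \<Longrightarrow> anc f u \<ge> 0"
  unfolding anc_def
proof (intro sum_nonneg)
  fix j assume f: "\<And>v. v \<in> gw_tree N \<Longrightarrow> f v \<ge> 0" and u: "u \<in> gw_tree N"
  have "take j u \<in> gw_tree N" using u unfolding gw_tree_def by auto
  then show "f (take j u) \<ge> 0" using f by blast
qed

lemma step_alg:
  fixes p c xC g xH k n qa qb qk xD \<beta> :: real
  assumes D: "xD = 1 + \<beta>*n" "xD > 0" "p = 1/xD" "c = \<beta>/xD"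
  and I1: "(1 - g) + \<beta>*(n + qa) = 0"
  and I2: "(1-g)^2 + \<beta>*(n + 2*qa + qb) = k - \<beta>*qk"
  shows "p*((xC-g) + 1) + c*(n*(xC + 1) + qa) = xC"
    and "p*((xC-g)^2 + (xH-k) + 2*(xC-g) + 1) + c*(n*(xC^2 + xH + 2*xC + 1) + (2*xC+2)*qa + qb + qk) = xC^2 + xH"
proof -
  have g: "g = 1 + \<beta>*(n+qa)" using I1 by simp
  have k: "k = (1-g)^2 + \<beta>*(n + 2*qa + qb) + \<beta>*qk" using I2 by simp
  have cp: "\<And>X Y. p*X + c*Y = (X + \<beta>*Y)/xD" using D by (simp add: add_divide_distrib)
  have "((xC-g) + 1) + \<beta>*(n*(xC + 1) + qa) = xC * xD"
    unfolding g D(1) by (simp add: algebra_simps)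
  then show "p*((xC-g) + 1) + c*(n*(xC + 1) + qa) = xC"
    unfolding cp using D(2) by simp
  have "((xC-g)^2 + (xH-k) + 2*(xC-g) + 1) + \<beta>*(n*(xC^2 + xH + 2*xC + 1) + (2*xC+2)*qa + qb + qk) = (xC^2 + xH) * xD"
    unfolding k g D(1) by (simp add: algebra_simps power2_eq_square)
  then show "p*((xC-g)^2 + (xH-k) + 2*(xC-g) + 1) + c*(n*(xC^2 + xH + 2*xC + 1) + (2*xC+2)*qa + qb + qk) = xC^2 + xH"
    unfolding cp using D(2) by simp
qed

lemma ET_real_Suc: "ET \<beta> N (real \<circ> Suc) T v = ET \<beta> N real T v + 1"
proof -
  have "real \<circ> Suc = (\<lambda>n. real n + 1)" by auto
  then show ?thesis using ET_add[of \<beta> N real "\<lambda>_. 1"] ET_one by simp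
qed

lemma ET_sq_Suc: "ET \<beta> N ((\<lambda>n. (real n)^2) \<circ> Suc) T v = ET \<beta> N (\<lambda>n. (real n)^2) T v + 2 * ET \<beta> N real T v + 1"
proof -
  have "(\<lambda>n. (real n)^2) \<circ> Suc = (\<lambda>n. ((real n)^2 + 2 * real n) + 1)" by (auto simp: power2_eq_square algebra_simps)
  then show ?thesis using ET_add[of \<beta> N "\<lambda>n. (real n)^2 + 2 * real n" "\<lambda>_. 1"] ET_one
      ET_add[of \<beta> N "\<lambda>n. (real n)^2" "\<lambda>n. 2 * real n"] ET_mult[of \<beta> N 2 real] by simp
qed

lemma walk_bound:
  fixes \<beta> :: real and N :: "nat list \<Rightarrow> nat" and y k :: "nat list \<Rightarrow> real"
  assumes b: "\<beta> > 0"
  and hy: "\<And>u. u \<in> gw_tree N \<Longrightarrow> y u = 1 + \<beta> * (\<Sum>i<N u. y (u@[i]))"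
  and hk: "\<And>u. u \<in> gw_tree N \<Longrightarrow> k u = 4*(y u - 1)^2 + 4*\<beta>*(\<Sum>i<N u. (y (u@[i]))^2) + \<beta>*(\<Sum>i<N u. k (u@[i]))"
  and y1: "\<And>u. u \<in> gw_tree N \<Longrightarrow> y u \<ge> 1"
  and k0: "\<And>u. u \<in> gw_tree N \<Longrightarrow> k u \<ge> 0"
  shows "u \<in> gw_tree N \<Longrightarrow> ET \<beta> N real T u \<le> anc (\<lambda>v. 2 * y v - 1) u \<and>
      ET \<beta> N (\<lambda>n. (real n)^2) T u \<le> (anc (\<lambda>v. 2 * y v - 1) u)^2 + anc k u"
proof (induction T arbitrary: u)
  case 0
  have g0: "\<And>v. v \<in> gw_tree N \<Longrightarrow> 2 * y v - 1 \<ge> 0" using y1 by fastforce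
  have "anc (\<lambda>v. 2 * y v - 1) u \<ge> 0" "anc k u \<ge> 0"
    using anc_nonneg[OF g0 0] anc_nonneg[OF k0 0] by auto
  then show ?case by (simp add: ET_def)
next
  case (Suc T)
  define g where "g = (\<lambda>v. 2 * y v - 1)"
  define M where "M = ET \<beta> N real T"
  define Q where "Q = ET \<beta> N (\<lambda>n. (real n)^2) T"
  define C where "C = anc g u"
  define H where "H = anc k u"
  define n where "n = real (N u)"
  define qa where "qa = (\<Sum>i<N u. g (u@[i]))"
  define qb where "qb = (\<Sum>i<N u. (g (u@[i]))^2)"
  define qk where "qk = (\<Sum>i<N u. k (u@[i]))"
  define D where "D = 1 + \<beta> * n"
  have D0: "D > 0" using b by (simp add: D_def n_def add_pos_nonneg)
  have p: "pu \<beta> N u = 1/D" by (simp add: pu_def D_def n_def)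
  have c: "cu \<beta> N u = \<beta>/D" by (simp add: cu_def D_def n_def)
  have pc0: "pu \<beta> N u \<ge> 0" "cu \<beta> N u \<ge> 0" using pc_nonneg[of \<beta> N u] b by auto
  have IH: "\<And>v. v \<in> gw_tree N \<Longrightarrow> M v \<le> anc g v \<and> Q v \<le> (anc g v)^2 + anc k v"
    using Suc.IH unfolding M_def Q_def g_def by blast
  have ch: "\<And>i. i < N u \<Longrightarrow> u @ [i] \<in> gw_tree N" using Suc.prems gw_tree_snoc by blast
  have I1: "(1 - g u) + \<beta>*(n + qa) = 0"
  proof -
    have "qa = 2 * (\<Sum>i<N u. y (u@[i])) - n"
      by (simp add: qa_def g_def n_def sum_subtractf sum_distrib_left)
    then show ?thesis using hy[OF Suc.prems] by (simp add: g_def algebra_simps)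
  qed
  have I2: "(1 - g u)^2 + \<beta>*(n + 2*qa + qb) = k u - \<beta>*qk"
  proof -
    have "n + 2*qa + qb = (\<Sum>i<N u. (1 + g (u@[i]))^2)"
      by (simp add: qa_def qb_def n_def power2_eq_square algebra_simps sum.distrib sum_distrib_left)
    also have "\<dots> = 4 * (\<Sum>i<N u. (y (u@[i]))^2)"
      by (simp add: g_def power2_eq_square sum_distrib_left)
    finally show ?thesis using hk[OF Suc.prems] by (simp add: g_def qk_def power2_eq_square algebra_simps)
  qed
  have upM: "(if u = [] then 1 else M (butlast u) + 1) \<le> (C - g u) + 1"
    using IH[OF gw_tree_butlast[OF Suc.prems]] by (auto simp: C_def anc_Nil anc_butlast)
  have upQ: "(if u = [] then 1 else Q (butlast u) + 2 * M (butlast u) + 1) \<le> (C - g u)^2 + (H - k u) + 2*(C - g u) + 1"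
  proof (cases "u = []")
    case True then show ?thesis by (simp add: C_def H_def anc_Nil)
  next
    case False
    have "M (butlast u) \<le> C - g u" "Q (butlast u) \<le> (C - g u)^2 + (H - k u)"
      using IH[OF gw_tree_butlast[OF Suc.prems False]] False by (auto simp: C_def H_def anc_butlast)
    then show ?thesis using False by simp
  qed
  have chM: "(\<Sum>i<N u. M (u@[i]) + 1) \<le> n*(C + 1) + qa"
  proof -
    have "(\<Sum>i<N u. M (u@[i]) + 1) \<le> (\<Sum>i<N u. C + g (u@[i]) + 1)"
    proof (intro sum_mono)
      fix i assume "i \<in> {..<N u}"
      then show "M (u@[i]) + 1 \<le> C + g (u@[i]) + 1" using IH[OF ch, of i] by (simp add: C_def anc_snoc)
    qed
    also have "\<dots> = n*(C+1) + qa" by (simp add: sum.distrib n_def qa_def algebra_simps)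
    finally show ?thesis .
  qed
  have chQ: "(\<Sum>i<N u. Q (u@[i]) + 2 * M (u@[i]) + 1) \<le> n*(C^2 + H + 2*C + 1) + (2*C+2)*qa + qb + qk"
  proof -
    have "(\<Sum>i<N u. Q (u@[i]) + 2 * M (u@[i]) + 1) \<le> (\<Sum>i<N u. ((C + g (u@[i]))^2 + (H + k (u@[i]))) + 2 * (C + g (u@[i])) + 1)"
    proof (intro sum_mono)
      fix i assume "i \<in> {..<N u}"
      then have "M (u@[i]) \<le> C + g (u@[i])" "Q (u@[i]) \<le> (C + g (u@[i]))^2 + (H + k (u@[i]))"
        using IH[OF ch] by (auto simp: C_def H_def anc_snoc)
      then show "Q (u@[i]) + 2 * M (u@[i]) + 1 \<le> ((C + g (u@[i]))^2 + (H + k (u@[i]))) + 2 * (C + g (u@[i])) + 1"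
        by simp
    qed
    also have "\<dots> = n*(C^2 + H + 2*C + 1) + (2*C+2)*qa + qb + qk"
      by (simp add: sum.distrib n_def qa_def qb_def qk_def power2_eq_square algebra_simps sum_distrib_left)
    finally show ?thesis .
  qed
  have alg: "pu \<beta> N u*((C-g u) + 1) + cu \<beta> N u*(n*(C + 1) + qa) = C"
     "pu \<beta> N u*((C-g u)^2 + (H-k u) + 2*(C-g u) + 1) + cu \<beta> N u*(n*(C^2 + H + 2*C + 1) + (2*C+2)*qa + qb + qk) = C^2 + H"
    using step_alg[OF D_def D0 p c I1 I2] by auto
  have "ET \<beta> N real (Suc T) u = pu \<beta> N u * (if u = [] then 1 else M (butlast u) + 1) + cu \<beta> N u * (\<Sum>i<N u. M (u@[i]) + 1)"
    using ET_Suc[of \<beta> N real T u] b by (simp add: ET_real_Suc M_def)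
  also have "\<dots> \<le> pu \<beta> N u*((C-g u) + 1) + cu \<beta> N u*(n*(C + 1) + qa)"
    using upM chM pc0 by (intro add_mono mult_left_mono) auto
  finally have r1: "ET \<beta> N real (Suc T) u \<le> C" using alg(1) by simp
  have "ET \<beta> N (\<lambda>n. (real n)^2) (Suc T) u = pu \<beta> N u * (if u = [] then 1 else Q (butlast u) + 2 * M (butlast u) + 1) + cu \<beta> N u * (\<Sum>i<N u. Q (u@[i]) + 2 * M (u@[i]) + 1)"
    using ET_Suc[of \<beta> N "\<lambda>n. (real n)^2" T u] b by (simp add: ET_sq_Suc M_def Q_def)
  also have "\<dots> \<le> pu \<beta> N u*((C-g u)^2 + (H-k u) + 2*(C-g u) + 1) + cu \<beta> N u*(n*(C^2 + H + 2*C + 1) + (2*C+2)*qa + qb + qk)"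
    using upQ chQ pc0 by (intro add_mono mult_left_mono) auto
  finally have r2: "ET \<beta> N (\<lambda>n. (real n)^2) (Suc T) u \<le> C^2 + H" using alg(2) by simp
  show ?case using r1 r2 by (simp add: C_def H_def g_def)
qed

lemma walk_final:
  fixes \<beta> :: real and N :: "nat list \<Rightarrow> nat" and y k :: "nat list \<Rightarrow> real"
  assumes b: "\<beta> > 0"
  and hy: "\<And>u. u \<in> gw_tree N \<Longrightarrow> y u = 1 + \<beta> * (\<Sum>i<N u. y (u@[i]))"
  and hk: "\<And>u. u \<in> gw_tree N \<Longrightarrow> k u = 4*(y u - 1)^2 + 4*\<beta>*(\<Sum>i<N u. (y (u@[i]))^2) + \<beta>*(\<Sum>i<N u. k (u@[i]))"
  and y1: "\<And>u. u \<in> gw_tree N \<Longrightarrow> y u \<ge> 1"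
  and k0: "\<And>u. u \<in> gw_tree N \<Longrightarrow> k u \<ge> 0"
  shows "(\<Sum>m\<le>T. (real m + 1)^2 * first_hit \<beta> N m []) \<le> 4*(y [])^2 + k []"
    and "real T * (1 - (\<Sum>m\<le>T. first_hit \<beta> N m [])) \<le> 2 * y [] - 1"
proof -
  have W: "ET \<beta> N real T [] \<le> 2 * y [] - 1 \<and> ET \<beta> N (\<lambda>n. (real n)^2) T [] \<le> (2 * y [] - 1)^2 + k []"
    using walk_bound[OF b hy hk y1 k0 gw_tree_Nil, of T] by (simp add: anc_Nil)
  have A: "1 - (\<Sum>m\<le>T. first_hit \<beta> N m []) \<ge> 0" using fh_sum_le1[where T=T and N=N and u="[]" and \<beta>=\<beta>] b by simp
  have fn: "\<And>m. first_hit \<beta> N m [] \<ge> 0" using fh_nonneg b by simp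
  have "ET \<beta> N (\<lambda>n. (real n + 1)^2) T [] = ET \<beta> N ((\<lambda>n. (real n)^2) \<circ> Suc) T []"
    by (rule arg_cong[where f="\<lambda>\<phi>. ET \<beta> N \<phi> T []"]) auto
  also have "\<dots> = ET \<beta> N (\<lambda>n. (real n)^2) T [] + 2 * ET \<beta> N real T [] + 1"
    by (rule ET_sq_Suc)
  also have "\<dots> \<le> (2 * y [] - 1)^2 + k [] + 2 * (2 * y [] - 1) + 1" using W by simp
  also have "\<dots> = 4*(y [])^2 + k []" by (simp add: power2_eq_square algebra_simps)
  finally have "ET \<beta> N (\<lambda>n. (real n + 1)^2) T [] \<le> 4*(y [])^2 + k []" .
  moreover have "(\<Sum>m\<le>T. (real m + 1)^2 * first_hit \<beta> N m []) \<le> ET \<beta> N (\<lambda>n. (real n + 1)^2) T []"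
    unfolding ET_def using A by (intro add_increasing2 mult_nonneg_nonneg) auto
  ultimately show "(\<Sum>m\<le>T. (real m + 1)^2 * first_hit \<beta> N m []) \<le> 4*(y [])^2 + k []" by linarith
  have "real T * (1 - (\<Sum>m\<le>T. first_hit \<beta> N m [])) \<le> ET \<beta> N real T []"
    unfolding ET_def using fn by (intro add_increasing sum_nonneg mult_nonneg_nonneg) auto
  then show "real T * (1 - (\<Sum>m\<le>T. first_hit \<beta> N m [])) \<le> 2 * y [] - 1" using W by linarith
qed

fun Lev :: "nat \<Rightarrow> ((nat list \<Rightarrow> nat) \<Rightarrow> ennreal) \<Rightarrow> (nat list \<Rightarrow> nat) \<Rightarrow> ennreal" where
  "Lev 0 \<phi> = \<phi>"
| "Lev (Suc d) \<phi> = csum (Lev d \<phi>)"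

definition Lf :: "real \<Rightarrow> ((nat list \<Rightarrow> nat) \<Rightarrow> ennreal) \<Rightarrow> (nat list \<Rightarrow> nat) \<Rightarrow> ennreal" where
  "Lf \<beta> \<phi> N = (\<Sum>d. ennreal (\<beta>^d) * Lev d \<phi> N)"

lemma suminf_head_ennreal: "(\<Sum>n. f n :: ennreal) = f 0 + (\<Sum>n. f (Suc n))"
proof -
  have "(\<lambda>n. f (Suc n)) sums (\<Sum>n. f (Suc n))" by (rule summable_sums) (rule summableI)
  then have "f sums ((\<Sum>n. f (Suc n)) + f 0)" by (rule sums_Suc)
  then show ?thesis by (simp add: sums_unique[symmetric] add.commute)
qed

lemma suminf_sum_ennreal: "(\<Sum>n. \<Sum>i\<in>I. f i n :: ennreal) = (\<Sum>i\<in>I. \<Sum>n. f i n)"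
  by (rule suminf_sum) (rule summableI)

lemma Lf_rec: assumes b: "\<beta> \<ge> 0"
  shows "Lf \<beta> \<phi> N = \<phi> N + ennreal \<beta> * csum (Lf \<beta> \<phi>) N"
proof -
  have "Lf \<beta> \<phi> N = \<phi> N + (\<Sum>d. ennreal (\<beta>^Suc d) * Lev (Suc d) \<phi> N)"
    unfolding Lf_def by (subst suminf_head_ennreal) simp
  also have "(\<Sum>d. ennreal (\<beta>^Suc d) * Lev (Suc d) \<phi> N) = (\<Sum>d. ennreal \<beta> * (\<Sum>i<N []. ennreal (\<beta>^d) * Lev d \<phi> (shft i N)))"
    using b by (intro suminf_cong) (simp add: csum_def ennreal_mult sum_distrib_left mult.assoc)
  also have "\<dots> = ennreal \<beta> * csum (Lf \<beta> \<phi>) N"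
    by (simp add: suminf_sum_ennreal csum_def Lf_def)
  finally show ?thesis .
qed

lemma meas_Lev[measurable]: "\<phi> \<in> borel_measurable (gw_measure R) \<Longrightarrow> Lev d \<phi> \<in> borel_measurable (gw_measure R)"
  by (induction d) (auto intro: meas_csum)

lemma meas_Lf[measurable]: assumes [measurable]: "\<phi> \<in> borel_measurable (gw_measure R)"
  shows "Lf \<beta> \<phi> \<in> borel_measurable (gw_measure R)"
proof -
  have "(\<lambda>N. \<Sum>d. ennreal (\<beta>^d) * Lev d \<phi> N) \<in> borel_measurable (gw_measure R)" by measurable
  then show ?thesis by (simp add: Lf_def[abs_def])
qed

lemma int_Lev: "\<phi> \<in> borel_measurable (gw_measure R) \<Longrightarrow>
   (\<integral>\<^sup>+N. Lev d \<phi> N \<partial>gw_measure R) = mR R ^ d * (\<integral>\<^sup>+N. \<phi> N \<partial>gw_measure R)"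
  by (induction d) (simp_all add: nn_integral_csum mult.assoc)

lemma int_Lf: assumes [measurable]: "\<phi> \<in> borel_measurable (gw_measure R)"
  shows "(\<integral>\<^sup>+N. Lf \<beta> \<phi> N \<partial>gw_measure R) = (\<Sum>d. ennreal (\<beta>^d) * mR R ^ d) * (\<integral>\<^sup>+N. \<phi> N \<partial>gw_measure R)"
proof -
  have "(\<integral>\<^sup>+N. Lf \<beta> \<phi> N \<partial>gw_measure R) = (\<Sum>d. \<integral>\<^sup>+N. ennreal (\<beta>^d) * Lev d \<phi> N \<partial>gw_measure R)"
    unfolding Lf_def by (rule nn_integral_suminf) measurable
  also have "\<dots> = (\<Sum>d. ennreal (\<beta>^d) * mR R ^ d * (\<integral>\<^sup>+N. \<phi> N \<partial>gw_measure R))"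
    by (intro suminf_cong) (simp add: nn_integral_cmult int_Lev mult.assoc)
  finally show ?thesis by (simp add: ennreal_suminf_multc)
qed


lemma geom_ennreal:
  assumes "0 \<le> \<beta>" "0 \<le> mr" "\<beta> * mr < 1"
  shows "(\<Sum>d. ennreal (\<beta>^d) * ennreal mr ^ d) = ennreal (1 / (1 - \<beta> * mr))"
proof -
  have "(\<Sum>d. ennreal (\<beta>^d) * ennreal mr ^ d) = (\<Sum>d. ennreal ((\<beta> * mr)^d))"
    using assms by (intro suminf_cong) (simp add: ennreal_power ennreal_mult power_mult_distrib)
  also have "\<dots> = ennreal (\<Sum>d. (\<beta> * mr)^d)"
    using assms by (intro suminf_ennreal2) (auto intro!: summable_geometric)
  also have "(\<Sum>d. (\<beta> * mr)^d) = 1 / (1 - \<beta> * mr)"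
    using assms mult_nonneg_nonneg[of \<beta> mr] by (intro suminf_geometric) simp
  finally show ?thesis .
qed

definition Yt :: "real \<Rightarrow> (nat list \<Rightarrow> nat) \<Rightarrow> ennreal" where "Yt \<beta> = Lf \<beta> (\<lambda>_. 1)"
definition Ytn :: "real \<Rightarrow> nat \<Rightarrow> (nat list \<Rightarrow> nat) \<Rightarrow> ennreal" where
  "Ytn \<beta> n N = (\<Sum>d<n. ennreal (\<beta>^d) * Lev d (\<lambda>_. 1) N)"

lemma Ytn_Suc: assumes b: "\<beta> \<ge> 0"
  shows "Ytn \<beta> (Suc n) N = 1 + ennreal \<beta> * csum (Ytn \<beta> n) N"
proof -
  have "Ytn \<beta> (Suc n) N = 1 + (\<Sum>d<n. ennreal (\<beta>^Suc d) * Lev (Suc d) (\<lambda>_. 1) N)"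
    unfolding Ytn_def by (subst sum.lessThan_Suc_shift) simp
  also have "(\<Sum>d<n. ennreal (\<beta>^Suc d) * Lev (Suc d) (\<lambda>_. 1) N) = (\<Sum>d<n. ennreal \<beta> * (\<Sum>i<N []. ennreal (\<beta>^d) * Lev d (\<lambda>_. 1) (shft i N)))"
    using b by (intro sum.cong) (simp_all add: csum_def ennreal_mult sum_distrib_left mult.assoc)
  also have "\<dots> = ennreal \<beta> * csum (Ytn \<beta> n) N"
    by (simp add: csum_def Ytn_def sum_distrib_left[symmetric] sum.swap[of _ "{..<n}"])
  finally show ?thesis .
qed

lemma Yt_SUP: "Yt \<beta> N = (SUP n. Ytn \<beta> n N)"
  unfolding Yt_def Lf_def Ytn_def by (rule suminf_eq_SUP)

lemma Ytn_mono: "n \<le> n' \<Longrightarrow> Ytn \<beta> n N \<le> Ytn \<beta> n' N"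
  unfolding Ytn_def by (rule sum_mono2) auto

lemma Ytn_le: "Ytn \<beta> n N \<le> Yt \<beta> N"
  unfolding Yt_SUP by (rule SUP_upper) simp

lemma meas_Ytn[measurable]: "Ytn \<beta> n \<in> borel_measurable (gw_measure R)"
  unfolding Ytn_def[abs_def] by measurable

lemma meas_Yt[measurable]: "Yt \<beta> \<in> borel_measurable (gw_measure R)"
  unfolding Yt_def by measurable

lemma SUP_sq_ennreal:
  fixes f :: "nat \<Rightarrow> ennreal"
  assumes "incseq f"
  shows "(SUP i. f i)^2 = (SUP i. (f i)^2)"
proof (rule antisym)
  have "(SUP i. f i)^2 = (SUP j. SUP i. f i * f j)"
    by (simp add: power2_eq_square SUP_mult_left_ennreal SUP_mult_right_ennreal)
  also have "\<dots> \<le> (SUP i. (f i)^2)"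
  proof (intro SUP_least)
    fix j i
    have "f i * f j \<le> f (max i j) * f (max i j)"
      using assms by (intro mult_mono) (auto simp: incseq_def)
    also have "\<dots> \<le> (SUP i. (f i)^2)" by (intro SUP_upper2[of "max i j"]) (auto simp: power2_eq_square)
    finally show "f i * f j \<le> (SUP i. (f i)^2)" .
  qed
  finally show "(SUP i. f i)^2 \<le> (SUP i. (f i)^2)" .
next
  show "(SUP i. (f i)^2) \<le> (SUP i. f i)^2"
    by (intro SUP_least power_mono) (auto intro: SUP_upper)
qed

lemma int_one_gw: "(\<integral>\<^sup>+N. 1 \<partial>gw_measure R) = 1"
  using prob_space.emeasure_space_1[OF prob_gw, of R] by simp


lemma emeasure_gw_UNIV: "emeasure (gw_measure R) UNIV = 1"
  using prob_space.emeasure_space_1[OF prob_gw, of R] by simp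

lemma int_Yt:
  assumes b: "\<beta> \<ge> 0" and m: "mR R = ennreal mr" "mr \<ge> 0" and c1: "\<beta> * mr < 1"
  shows "(\<integral>\<^sup>+N. Yt \<beta> N \<partial>gw_measure R) = ennreal (1 / (1 - \<beta> * mr))"
  unfolding Yt_def by (simp add: int_Lf int_one_gw m geom_ennreal b c1 emeasure_gw_UNIV)

lemma int_Yt_sq:
  assumes b: "\<beta> \<ge> 0" and m: "mR R = ennreal mr" "mr \<ge> 0" and v: "vR R = ennreal vr" "vr \<ge> 0"
    and c1: "\<beta> * mr < 1" and c2: "\<beta>^2 * mr < 1"
  defines "a \<equiv> 1 / (1 - \<beta> * mr)"
  defines "C \<equiv> (1 + 2*\<beta>*mr*a + \<beta>^2* vr*a^2) / (1 - \<beta>^2*mr)"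
  shows "(\<integral>\<^sup>+N. (Yt \<beta> N)^2 \<partial>gw_measure R) \<le> ennreal C"
proof -
  have a0: "a \<ge> 0" using c1 by (simp add: a_def)
  have C0: "C \<ge> 0" using c2 a0 b m v by (simp add: C_def)
  have Ceq: "1 + 2*\<beta>*mr*a + \<beta>^2*(mr*C + vr*a^2) = C"
    using c2 unfolding C_def by (simp add: field_simps)
  have Ea: "(\<integral>\<^sup>+N. Ytn \<beta> n N \<partial>gw_measure R) \<le> ennreal a" for n
  proof -
    have "(\<integral>\<^sup>+N. Ytn \<beta> n N \<partial>gw_measure R) \<le> (\<integral>\<^sup>+N. Yt \<beta> N \<partial>gw_measure R)"
      by (intro nn_integral_mono Ytn_le)
    then show ?thesis using int_Yt[OF b m c1] by (simp add: a_def)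
  qed
  have ind: "(\<integral>\<^sup>+N. (Ytn \<beta> n N)^2 \<partial>gw_measure R) \<le> ennreal C" for n
  proof (induction n)
    case 0 then show ?case by (simp add: Ytn_def)
  next
    case (Suc n)
    define E where "E = (\<integral>\<^sup>+N. Ytn \<beta> n N \<partial>gw_measure R)"
    define E2 where "E2 = (\<integral>\<^sup>+N. (Ytn \<beta> n N)^2 \<partial>gw_measure R)"
    have pt: "(Ytn \<beta> (Suc n) N)^2 = 1 + (2 * ennreal \<beta> * csum (Ytn \<beta> n) N + ennreal \<beta>^2 * (csum (Ytn \<beta> n) N)^2)" for N
    proof -
      have "(1 + ennreal \<beta> * csum (Ytn \<beta> n) N)^2 = 1^2 + (ennreal \<beta> * csum (Ytn \<beta> n) N)^2 + 2 * 1 * (ennreal \<beta> * csum (Ytn \<beta> n) N)"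
        by (rule power2_sum)
      then show ?thesis unfolding Ytn_Suc[OF b] by (simp add: power_mult_distrib mult.assoc add_ac)
    qed
    have "(\<integral>\<^sup>+N. (Ytn \<beta> (Suc n) N)^2 \<partial>gw_measure R)
        = 1 + (2 * ennreal \<beta> * (\<integral>\<^sup>+N. csum (Ytn \<beta> n) N \<partial>gw_measure R) + ennreal \<beta>^2 * (\<integral>\<^sup>+N. (csum (Ytn \<beta> n) N)^2 \<partial>gw_measure R))"
      unfolding pt by (simp add: nn_integral_add nn_integral_cmult int_one_gw emeasure_gw_UNIV)
    also have "\<dots> = 1 + (2 * ennreal \<beta> * (ennreal mr * E) + ennreal \<beta>^2 * (ennreal mr * E2 + ennreal vr * E^2))"
      by (simp add: nn_integral_csum nn_integral_csum_sq m v E_def E2_def)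
    also have "\<dots> \<le> 1 + (2 * ennreal \<beta> * (ennreal mr * ennreal a) + ennreal \<beta>^2 * (ennreal mr * ennreal C + ennreal vr * ennreal a^2))"
      using Ea[of n] Suc.IH unfolding E_def[symmetric] E2_def[symmetric]
      by (intro add_mono mult_left_mono order.refl power_mono) auto
    also have "\<dots> = ennreal (1 + 2*\<beta>*mr*a + \<beta>^2*(mr*C + vr*a^2))"
      using b m v a0 C0 by (simp add: ennreal_mult' ennreal_power ennreal_plus mult.assoc)
    finally show ?case unfolding Ceq .
  qed
  have inc: "incseq (\<lambda>n N. (Ytn \<beta> n N)^2)"
    by (auto simp: incseq_def le_fun_def intro!: power_mono Ytn_mono)
  have "(\<integral>\<^sup>+N. (Yt \<beta> N)^2 \<partial>gw_measure R) = (\<integral>\<^sup>+N. (SUP n. (Ytn \<beta> n N)^2) \<partial>gw_measure R)"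
    unfolding Yt_SUP by (intro nn_integral_cong SUP_sq_ennreal) (auto simp: incseq_def intro: Ytn_mono)
  also have "\<dots> = (SUP n. \<integral>\<^sup>+N. (Ytn \<beta> n N)^2 \<partial>gw_measure R)"
    by (rule nn_integral_monotone_convergence_SUP[OF inc]) measurable
  also have "\<dots> \<le> ennreal C" by (intro SUP_least ind)
  finally show ?thesis .
qed


definition Yp :: "real \<Rightarrow> (nat list \<Rightarrow> nat) \<Rightarrow> ennreal" where
  "Yp \<beta> N = ennreal \<beta> * csum (Yt \<beta>) N"
definition phi :: "real \<Rightarrow> (nat list \<Rightarrow> nat) \<Rightarrow> ennreal" where
  "phi \<beta> N = 4 * (Yp \<beta> N)^2 + 4 * ennreal \<beta> * csum (\<lambda>M. (Yt \<beta> M)^2) N"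
definition Kf :: "real \<Rightarrow> (nat list \<Rightarrow> nat) \<Rightarrow> ennreal" where
  "Kf \<beta> = Lf \<beta> (phi \<beta>)"

lemma Yt_rec: "\<beta> \<ge> 0 \<Longrightarrow> Yt \<beta> N = 1 + Yp \<beta> N"
  unfolding Yt_def Yp_def by (subst Lf_rec) auto

lemma Kf_rec: "\<beta> \<ge> 0 \<Longrightarrow> Kf \<beta> N = phi \<beta> N + ennreal \<beta> * csum (Kf \<beta>) N"
  unfolding Kf_def by (rule Lf_rec)

lemma meas_phi[measurable]: "phi \<beta> \<in> borel_measurable (gw_measure R)"
  unfolding phi_def[abs_def] Yp_def[abs_def] by measurable

lemma meas_Kf[measurable]: "Kf \<beta> \<in> borel_measurable (gw_measure R)"
  unfolding Kf_def by measurable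

lemma int_final:
  assumes b: "\<beta> \<ge> 0" and m: "mR R = ennreal mr" "mr \<ge> 0" and v: "vR R = ennreal vr" "vr \<ge> 0"
    and c1: "\<beta> * mr < 1" and c2: "\<beta>^2 * mr < 1"
  shows "(\<integral>\<^sup>+N. 4 * (Yt \<beta> N)^2 + Kf \<beta> N \<partial>gw_measure R) < \<top>"
proof -
  define E1 where "E1 = (\<integral>\<^sup>+N. Yt \<beta> N \<partial>gw_measure R)"
  define E2 where "E2 = (\<integral>\<^sup>+N. (Yt \<beta> N)^2 \<partial>gw_measure R)"
  have E1: "E1 < \<top>" using int_Yt[OF b m c1] by (simp add: E1_def)
  have E2: "E2 < \<top>" using int_Yt_sq[OF b m v c1 c2] unfolding E2_def
    using le_less_trans ennreal_less_top by blast
  have Ephi: "(\<integral>\<^sup>+N. phi \<beta> N \<partial>gw_measure R) = 4 * (ennreal \<beta>^2 * (ennreal mr * E2 + ennreal vr * E1^2)) + 4 * ennreal \<beta> * (ennreal mr * E2)"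
    unfolding phi_def Yp_def
    by (simp add: nn_integral_add nn_integral_cmult nn_integral_csum nn_integral_csum_sq power_mult_distrib m v E1_def E2_def)
  have Ephi': "(\<integral>\<^sup>+N. phi \<beta> N \<partial>gw_measure R) < \<top>"
    unfolding Ephi using E1 E2 by (simp add: ennreal_mult_less_top power_less_top_ennreal)
  have EK: "(\<integral>\<^sup>+N. Kf \<beta> N \<partial>gw_measure R) < \<top>"
    unfolding Kf_def using Ephi' by (simp add: int_Lf m geom_ennreal b c1 ennreal_mult_less_top)
  have "(\<integral>\<^sup>+N. 4 * (Yt \<beta> N)^2 + Kf \<beta> N \<partial>gw_measure R) = 4 * E2 + (\<integral>\<^sup>+N. Kf \<beta> N \<partial>gw_measure R)"
    by (simp add: nn_integral_add nn_integral_cmult E2_def)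
  then show ?thesis using E2 EK by (simp add: ennreal_mult_less_top)
qed


definition sub :: "nat list \<Rightarrow> (nat list \<Rightarrow> nat) \<Rightarrow> (nat list \<Rightarrow> nat)" where
  "sub u N = (\<lambda>v. N (u @ v))"

lemma sub_Nil[simp]: "sub [] N = N" by (simp add: sub_def)
lemma sub_root[simp]: "sub u N [] = N u" by (simp add: sub_def)
lemma shft_sub[simp]: "shft i (sub u N) = sub (u @ [i]) N" by (simp add: sub_def shft_def fun_eq_iff)
lemma csum_sub: "csum G (sub u N) = (\<Sum>i<N u. G (sub (u @ [i]) N))"
  by (simp add: csum_def)

lemma mult_less_top_pos: "0 < \<beta> \<Longrightarrow> ennreal \<beta> * x < \<top> \<Longrightarrow> x < (\<top>::ennreal)"
  by (cases "x = 0") (auto simp: ennreal_mult_less_top)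

lemma tree_finite:
  assumes b: "\<beta> > 0" and Y: "Yt \<beta> N < \<top>" and K: "Kf \<beta> N < \<top>"
  shows "u \<in> gw_tree N \<Longrightarrow> Yt \<beta> (sub u N) < \<top> \<and> Kf \<beta> (sub u N) < \<top>"
proof (induction u rule: rev_induct)
  case Nil then show ?case using Y K by simp
next
  case (snoc i u)
  have u: "u \<in> gw_tree N" and i: "i < N u" using snoc.prems gw_tree_snoc by auto
  have IH: "Yt \<beta> (sub u N) < \<top>" "Kf \<beta> (sub u N) < \<top>" using snoc.IH[OF u] by auto
  have "ennreal \<beta> * Yt \<beta> (sub (u @ [i]) N) \<le> ennreal \<beta> * (\<Sum>j<N u. Yt \<beta> (sub (u @ [j]) N))"
    using i by (intro mult_left_mono member_le_sum) auto
  also have "\<dots> \<le> Yt \<beta> (sub u N)"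
    using b by (subst (2) Yt_rec) (auto simp: Yp_def csum_sub)
  finally have 1: "Yt \<beta> (sub (u @ [i]) N) < \<top>" using IH(1) b mult_less_top_pos by (meson le_less_trans)
  have "ennreal \<beta> * Kf \<beta> (sub (u @ [i]) N) \<le> ennreal \<beta> * (\<Sum>j<N u. Kf \<beta> (sub (u @ [j]) N))"
    using i by (intro mult_left_mono member_le_sum) auto
  also have "\<dots> \<le> Kf \<beta> (sub u N)"
    using b by (subst (2) Kf_rec) (auto simp: csum_sub)
  finally have 2: "Kf \<beta> (sub (u @ [i]) N) < \<top>" using IH(2) b mult_less_top_pos by (meson le_less_trans)
  show ?case using 1 2 by simp
qed


lemma rtsm_bound:
  assumes b: "\<beta> > 0"
  shows "return_time_second_moment \<beta> N \<le> 4 * (Yt \<beta> N)^2 + Kf \<beta> N"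
proof (cases "Yt \<beta> N < \<top> \<and> Kf \<beta> N < \<top>")
  case False
  then have "4 * (Yt \<beta> N)^2 + Kf \<beta> N = \<top>"
    by (auto simp: less_top[symmetric] ennreal_mult_eq_top_iff power_eq_top_ennreal)
  then show ?thesis by (metis top_greatest)
next
  case True
  have b0: "\<beta> \<ge> 0" using b by simp
  define y where "y = (\<lambda>u. enn2real (Yt \<beta> (sub u N)))"
  define k where "k = (\<lambda>u. enn2real (Kf \<beta> (sub u N)))"
  have fin: "\<And>u. u \<in> gw_tree N \<Longrightarrow> Yt \<beta> (sub u N) < \<top> \<and> Kf \<beta> (sub u N) < \<top>"
    using tree_finite[OF b] True by blast
  have Ye: "\<And>u. u \<in> gw_tree N \<Longrightarrow> Yt \<beta> (sub u N) = ennreal (y u)"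
    using fin by (simp add: y_def ennreal_enn2real less_top)
  have Ke: "\<And>u. u \<in> gw_tree N \<Longrightarrow> Kf \<beta> (sub u N) = ennreal (k u)"
    using fin by (simp add: k_def ennreal_enn2real less_top)
  have y0: "\<And>u. y u \<ge> 0" by (simp add: y_def)
  have k0: "\<And>u. k u \<ge> 0" by (simp add: k_def)
  have ch: "\<And>u i. u \<in> gw_tree N \<Longrightarrow> i < N u \<Longrightarrow> u @ [i] \<in> gw_tree N" using gw_tree_snoc by blast
  have hy: "y u = 1 + \<beta> * (\<Sum>i<N u. y (u@[i]))" if u: "u \<in> gw_tree N" for u
  proof -
    have "ennreal (y u) = 1 + ennreal \<beta> * (\<Sum>i<N u. ennreal (y (u@[i])))"
      using Yt_rec[OF b0, of "sub u N"] Ye[OF u] Ye[OF ch[OF u]] by (simp add: Yp_def csum_sub)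
    also have "\<dots> = ennreal (1 + \<beta> * (\<Sum>i<N u. y (u@[i])))"
      using y0 b0 by (simp add: ennreal_mult sum_nonneg)
    finally have e: "ennreal (y u) = ennreal (1 + \<beta> * (\<Sum>i<N u. y (u@[i])))" .
    have "0 \<le> \<beta> * (\<Sum>i<N u. y (u@[i]))" using y0 b0 by (simp add: sum_nonneg)
    then show ?thesis using e y0[of u] by (subst (asm) ennreal_inj) auto
  qed
  have y1: "y u \<ge> 1" if u: "u \<in> gw_tree N" for u
    using hy[OF u] y0 b0 by (simp add: sum_nonneg)
  have hk: "k u = 4*(y u - 1)^2 + 4*\<beta>*(\<Sum>i<N u. (y (u@[i]))^2) + \<beta>*(\<Sum>i<N u. k (u@[i]))"
    if u: "u \<in> gw_tree N" for u
  proof -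
    have "ennreal (k u) = 4 * (ennreal \<beta> * (\<Sum>i<N u. ennreal (y (u@[i]))))^2 + 4 * ennreal \<beta> * (\<Sum>i<N u. (ennreal (y (u@[i])))^2)
        + ennreal \<beta> * (\<Sum>i<N u. ennreal (k (u@[i])))"
      using Kf_rec[OF b0, of "sub u N"] Ke[OF u] Ke[OF ch[OF u]] Ye[OF ch[OF u]]
      by (simp add: phi_def Yp_def csum_sub)
    also have "(\<Sum>i<N u. ennreal (y (u@[i]))) = ennreal (\<Sum>i<N u. y (u@[i]))"
      using y0 by (simp add: sum_ennreal)
    also have "(\<Sum>i<N u. (ennreal (y (u@[i])))^2) = ennreal (\<Sum>i<N u. (y (u@[i]))^2)"
      using y0 by (simp add: ennreal_power sum_ennreal)
    also have "(\<Sum>i<N u. ennreal (k (u@[i]))) = ennreal (\<Sum>i<N u. k (u@[i]))"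
      using k0 by (simp add: sum_ennreal)
    also have "4 * (ennreal \<beta> * ennreal (\<Sum>i<N u. y (u@[i])))^2 + 4 * ennreal \<beta> * ennreal (\<Sum>i<N u. (y (u@[i]))^2)
        + ennreal \<beta> * ennreal (\<Sum>i<N u. k (u@[i]))
      = ennreal (4*(\<beta> * (\<Sum>i<N u. y (u@[i])))^2 + 4*\<beta>*(\<Sum>i<N u. (y (u@[i]))^2) + \<beta>*(\<Sum>i<N u. k (u@[i])))"
      using y0 k0 b0 by (simp add: ennreal_mult ennreal_power[symmetric] sum_nonneg mult_nonneg_nonneg)
    finally have "k u = 4*(\<beta> * (\<Sum>i<N u. y (u@[i])))^2 + 4*\<beta>*(\<Sum>i<N u. (y (u@[i]))^2) + \<beta>*(\<Sum>i<N u. k (u@[i]))"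
      using y0 k0 b0 by (subst (asm) ennreal_inj) (auto intro!: sum_nonneg add_nonneg_nonneg mult_nonneg_nonneg)
    then show ?thesis using hy[OF u] by simp
  qed
  have W1: "\<And>T. (\<Sum>m\<le>T. (real m + 1)^2 * first_hit \<beta> N m []) \<le> 4*(y [])^2 + k []"
    and W2: "\<And>T. real T * (1 - (\<Sum>m\<le>T. first_hit \<beta> N m [])) \<le> 2 * y [] - 1"
    using walk_final[OF b hy hk y1 k0] by auto
  have fh0: "\<And>m. first_hit \<beta> N m [] \<ge> 0" using fh_nonneg b0 by simp
  have top: "4 * (Yt \<beta> N)^2 + Kf \<beta> N = ennreal (4*(y [])^2 + k [])"
    using Ye[OF gw_tree_Nil] Ke[OF gw_tree_Nil] y0 k0 by (simp add: ennreal_power ennreal_mult)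
  have part1: "(\<Sum>m. ennreal ((real m + 1)^2 * first_hit \<beta> N m [])) \<le> ennreal (4*(y [])^2 + k [])"
  proof (rule suminf_le_const[OF summableI])
    fix n
    have "(\<Sum>m<n. ennreal ((real m + 1)^2 * first_hit \<beta> N m [])) = ennreal (\<Sum>m<n. (real m + 1)^2 * first_hit \<beta> N m [])"
      using fh0 by (simp add: sum_ennreal)
    also have "\<dots> \<le> ennreal (4*(y [])^2 + k [])"
    proof (rule ennreal_leI)
      have "(\<Sum>m<n. (real m + 1)^2 * first_hit \<beta> N m []) \<le> (\<Sum>m\<le>n. (real m + 1)^2 * first_hit \<beta> N m [])"
        using fh0 by (intro sum_mono2) auto
      also have "\<dots> \<le> 4*(y [])^2 + k []" by (rule W1)
      finally show "(\<Sum>m<n. (real m + 1)^2 * first_hit \<beta> N m []) \<le> 4*(y [])^2 + k []" .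
    qed
    finally show "(\<Sum>m<n. ennreal ((real m + 1)^2 * first_hit \<beta> N m [])) \<le> ennreal (4*(y [])^2 + k [])" .
  qed
  have part2: "\<not> (\<Sum>m. ennreal (first_hit \<beta> N m [])) < 1"
  proof
    assume S1: "(\<Sum>m. ennreal (first_hit \<beta> N m [])) < 1"
    define S where "S = (\<Sum>m. ennreal (first_hit \<beta> N m []))"
    have St: "S < \<top>" using S1 unfolding S_def using less_le_trans by fastforce
    define s where "s = enn2real S"
    have Ss: "S = ennreal s" using St by (simp add: s_def ennreal_enn2real less_top)
    have s0: "s \<ge> 0" by (simp add: s_def)
    have s1: "s < 1" using S1 Ss unfolding S_def by (simp add: ennreal_less_one_iff)
    have AT: "(\<Sum>m\<le>T. first_hit \<beta> N m []) \<le> s" for T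
    proof -
      have "ennreal (\<Sum>m\<le>T. first_hit \<beta> N m []) = (\<Sum>m\<le>T. ennreal (first_hit \<beta> N m []))"
        using fh0 by (simp add: sum_ennreal)
      also have "\<dots> \<le> S" unfolding S_def by (intro sum_le_suminf summableI) auto
      finally show ?thesis using Ss s0 by simp
    qed
    obtain T :: nat where T: "real T > (2 * y [] - 1) / (1 - s)" using reals_Archimedean2 by blast
    have "real T * (1 - s) \<le> real T * (1 - (\<Sum>m\<le>T. first_hit \<beta> N m []))"
      using AT[of T] by (intro mult_left_mono) auto
    also have "\<dots> \<le> 2 * y [] - 1" by (rule W2)
    finally have "real T * (1 - s) \<le> 2 * y [] - 1" .
    moreover have "real T * (1 - s) > 2 * y [] - 1" using T s1 by (simp add: field_simps)
    ultimately show False by simp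
  qed
  show ?thesis unfolding return_time_second_moment_def top using part1 part2 by simp
qed

lemma gw_tree_Cons: "i # v \<in> gw_tree N \<longleftrightarrow> i < N [] \<and> v \<in> gw_tree (shft i N)"
  unfolding gw_tree_def shft_def by (simp add: All_less_Suc2)

lemma gw_tree_take: "u \<in> gw_tree N \<Longrightarrow> take n u \<in> gw_tree N"
  unfolding gw_tree_def by auto

definition lev :: "nat \<Rightarrow> (nat list \<Rightarrow> nat) \<Rightarrow> bool" where
  "lev n N = (\<exists>u\<in>gw_tree N. length u = n)"

lemma lev_0: "lev 0 N"
  unfolding lev_def gw_tree_def by (intro bexI[of _ "[]"]) auto

lemma lev_Suc: "lev (Suc n) N \<longleftrightarrow> (\<exists>i < N []. lev n (shft i N))"
proof
  assume "lev (Suc n) N"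
  then obtain u where u: "u \<in> gw_tree N" "length u = Suc n" unfolding lev_def by auto
  then obtain i v where "u = i # v" by (cases u) auto
  then show "\<exists>i < N []. lev n (shft i N)" using u gw_tree_Cons unfolding lev_def by auto
next
  assume "\<exists>i < N []. lev n (shft i N)"
  then obtain i v where "i < N []" "v \<in> gw_tree (shft i N)" "length v = n" unfolding lev_def by auto
  then show "lev (Suc n) N" unfolding lev_def using gw_tree_Cons by (intro bexI[of _ "i # v"]) auto
qed

lemma lev_mono: "lev (Suc n) N \<Longrightarrow> lev n N"
proof -
  assume "lev (Suc n) N"
  then obtain u where "u \<in> gw_tree N" "length u = Suc n" unfolding lev_def by auto
  then show ?thesis unfolding lev_def by (intro bexI[of _ "take n u"]) (auto intro: gw_tree_take)
qed

definition Fx :: "nat \<Rightarrow> (nat list \<Rightarrow> nat) set" where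
  "Fx n = {N. \<not> lev n N}"

lemma Fx_0: "Fx 0 = {}" by (simp add: Fx_def lev_0)

lemma Fx_Suc: "Fx (Suc n) = {N. \<forall>i < N []. shft i N \<in> Fx n}"
  by (auto simp: Fx_def lev_Suc)

lemma Fx_mono: "Fx n \<subseteq> Fx (Suc n)"
  unfolding Fx_def using lev_mono by auto

lemma sets_forall_shft:
  assumes A: "A \<in> sets (gw_measure R)"
  shows "{N. \<forall>i < N []. shft i N \<in> A} \<in> sets (gw_measure R)"
proof -
  have e: "{N. \<forall>i < N []. shft i N \<in> A} = (\<Inter>i. ((\<lambda>N. N []) -` {..i} \<inter> space (gw_measure R)) \<union> (shft i -` A \<inter> space (gw_measure R)))"
    by (auto; meson not_le)
  have "(\<lambda>N. N []) -` {..i} \<inter> space (gw_measure R) \<in> sets (gw_measure R)" for i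
    by (rule measurable_sets[OF meas_coord_cs]) simp
  moreover have "shft i -` A \<inter> space (gw_measure R) \<in> sets (gw_measure R)" for i
    by (rule measurable_sets[OF meas_shift A])
  ultimately show ?thesis unfolding e by (intro sets.countable_INT) auto
qed

lemma sets_Fx: "Fx n \<in> sets (gw_measure R)"
  by (induction n) (simp_all add: Fx_0 Fx_Suc sets_forall_shft)

lemma emeasure_forall_shft:
  assumes A: "A \<in> sets (gw_measure R)"
  shows "emeasure (gw_measure R) {N. \<forall>i < N []. shft i N \<in> A} = (\<Sum>k. ennreal (pmf R k) * emeasure (gw_measure R) A ^ k)"
proof -
  have ind: "indicator {N. \<forall>i < N []. shft i N \<in> A} N = (\<Sum>k. of_bool (N [] = k) * (\<Prod>i\<in>{..<k}. indicator A (shft i N)) :: ennreal)" for N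
    by (subst suminf_finite[of "{N []}"]) (auto simp: indicator_def)
  have "emeasure (gw_measure R) {N. \<forall>i < N []. shft i N \<in> A} = (\<integral>\<^sup>+N. indicator {N. \<forall>i < N []. shft i N \<in> A} N \<partial>gw_measure R)"
    using sets_forall_shft[OF A] by simp
  also have "\<dots> = (\<Sum>k. \<integral>\<^sup>+N. of_bool (N [] = k) * (\<Prod>i\<in>{..<k}. indicator A (shft i N)) \<partial>gw_measure R)"
  proof (unfold ind, rule nn_integral_suminf)
    fix k
    have "(\<lambda>N. indicator A (shft i N) :: ennreal) \<in> borel_measurable (gw_measure R)" for i
      by (rule measurable_compose[OF meas_shift borel_measurable_indicator[OF A]])
    then show "(\<lambda>N. of_bool (N [] = k) * (\<Prod>i\<in>{..<k}. indicator A (shft i N)) :: ennreal) \<in> borel_measurable (gw_measure R)"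
      using meas_coord_fun[of "\<lambda>x. of_bool (x = k) :: ennreal" "[]" R]
      by (intro borel_measurable_times_ennreal borel_measurable_prod_ennreal) auto
  qed
  also have "\<dots> = (\<Sum>k. (\<integral>\<^sup>+x. of_bool (x = k) \<partial>measure_pmf R) * (\<Prod>i\<in>{..<k}. \<integral>\<^sup>+N. indicator A N \<partial>gw_measure R))"
    using A by (intro suminf_cong indep_prod) auto
  also have "\<dots> = (\<Sum>k. ennreal (pmf R k) * emeasure (gw_measure R) A ^ k)"
  proof (intro suminf_cong)
    fix k
    have "(\<integral>\<^sup>+x. of_bool (x = k) \<partial>measure_pmf R) = (\<integral>\<^sup>+x. indicator {k} x \<partial>measure_pmf R)"
      by (intro nn_integral_cong) (auto simp: indicator_def)
    also have "\<dots> = ennreal (pmf R k)" by (simp add: emeasure_pmf_single)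
    finally show "(\<integral>\<^sup>+x. of_bool (x = k) \<partial>measure_pmf R) * (\<Prod>i\<in>{..<k}. \<integral>\<^sup>+N. indicator A N \<partial>gw_measure R)
      = ennreal (pmf R k) * emeasure (gw_measure R) A ^ k" using A by simp
  qed
  finally show ?thesis .
qed


lemma pmf_ennreal_sum: "(\<Sum>k. ennreal (pmf P k)) = 1"
proof -
  have "(\<Sum>k. ennreal (pmf P k)) = (\<integral>\<^sup>+x. ennreal (pmf P x) \<partial>count_space UNIV)"
    by (rule nn_integral_count_space_nat[symmetric])
  also have "\<dots> = emeasure (measure_pmf P) UNIV" by (rule nn_integral_pmf)
  also have "\<dots> = 1" by (metis measure_pmf.emeasure_space_1 space_measure_pmf)
  finally show ?thesis .
qed

lemma pmf_summable: "summable (\<lambda>k. pmf P k)"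
  by (rule summable_suminf_not_top) (auto simp: pmf_ennreal_sum)

lemma pmf_suminf: "(\<Sum>k. pmf P k) = 1"
proof -
  have "ennreal (\<Sum>k. pmf P k) = 1"
    using pmf_ennreal_sum[of P] by (subst suminf_ennreal2[symmetric]) (auto intro: pmf_summable)
  then show ?thesis by simp
qed

lemma pgf_summable: "\<bar>s\<bar> \<le> 1 \<Longrightarrow> summable (\<lambda>k. pmf P k * s^k)"
proof (rule summable_comparison_test[OF _ pmf_summable])
  assume s: "\<bar>s\<bar> \<le> 1"
  show "\<exists>N. \<forall>n\<ge>N. norm (pmf P n * s^n) \<le> pmf P n"
    using s by (auto simp: abs_mult power_abs intro!: mult_left_le power_le_one)
qed

lemma pgf_mono: "0 \<le> x \<Longrightarrow> x \<le> y \<Longrightarrow> y \<le> 1 \<Longrightarrow> pgf P x \<le> pgf P y"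
  unfolding pgf_def by (intro suminf_le pgf_summable mult_left_mono power_mono) auto

lemma pgf_ennreal: "0 \<le> s \<Longrightarrow> s \<le> 1 \<Longrightarrow> (\<Sum>k. ennreal (pmf P k) * ennreal s ^ k) = ennreal (pgf P s)"
  unfolding pgf_def
  by (subst suminf_ennreal2[symmetric]) (auto intro!: suminf_cong pgf_summable simp: ennreal_power ennreal_mult)

lemma finite_tree_Fx: "finite (gw_tree N) \<Longrightarrow> \<exists>n. N \<in> Fx n"
proof -
  assume fin: "finite (gw_tree N)"
  define n where "n = Suc (Max (length ` gw_tree N))"
  have "\<not> lev n N"
  proof
    assume "lev n N"
    then obtain u where u: "u \<in> gw_tree N" "length u = n" unfolding lev_def by auto
    have "length u \<le> Max (length ` gw_tree N)" using fin u by (intro Max_ge) auto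
    then show False using u by (simp add: n_def)
  qed
  then show ?thesis by (auto simp: Fx_def)
qed

lemma extinction_le:
  assumes s0: "0 \<le> s" and s1: "s \<le> 1" and fs: "pgf P s \<le> s"
  shows "extinction_prob P \<le> s"
proof -
  have xn: "emeasure (gw_measure P) (Fx n) \<le> ennreal s" for n
  proof (induction n)
    case 0 then show ?case by (simp add: Fx_0)
  next
    case (Suc n)
    have "emeasure (gw_measure P) (Fx (Suc n)) = (\<Sum>k. ennreal (pmf P k) * emeasure (gw_measure P) (Fx n) ^ k)"
      unfolding Fx_Suc by (rule emeasure_forall_shft[OF sets_Fx])
    also have "\<dots> \<le> (\<Sum>k. ennreal (pmf P k) * ennreal s ^ k)"
      using Suc.IH by (intro suminf_le summableI mult_left_mono power_mono) auto
    also have "\<dots> = ennreal (pgf P s)" by (rule pgf_ennreal[OF s0 s1])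
    also have "\<dots> \<le> ennreal s" using fs by (rule ennreal_leI)
    finally show ?case .
  qed
  have "emeasure (gw_measure P) {N. finite (gw_tree N)} \<le> emeasure (gw_measure P) (\<Union>n. Fx n)"
    using finite_tree_Fx by (intro emeasure_mono) (auto intro: sets.countable_UN sets_Fx)
  also have "\<dots> = (SUP n. emeasure (gw_measure P) (Fx n))"
    by (rule SUP_emeasure_incseq[symmetric]) (auto intro: sets_Fx simp: incseq_Suc_iff Fx_mono)
  also have "\<dots> \<le> ennreal s" by (intro SUP_least xn)
  finally have "emeasure (gw_measure P) {N. finite (gw_tree N)} \<le> ennreal s" .
  then show ?thesis unfolding extinction_prob_def measure_def using s0 by (simp add: enn2real_leI)
qed

lemma exists_s:
  assumes sm: "summable (\<lambda>k. real k * pmf P k)" and mu: "offspring_mean P > 1"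
  shows "\<exists>s. 0 \<le> s \<and> s < 1 \<and> pgf P s \<le> s"
proof -
  have "(\<lambda>n. \<Sum>k<n. real k * pmf P k) \<longlonglongrightarrow> offspring_mean P"
    unfolding offspring_mean_def by (rule summable_LIMSEQ[OF sm])
  then have "eventually (\<lambda>n. (\<Sum>k<n. real k * pmf P k) > 1) sequentially"
    using mu by (rule order_tendstoD(1))
  then obtain K where HK: "(\<Sum>k<K. real k * pmf P k) > 1"
    by (auto simp: eventually_sequentially)
  define H where "H = (\<Sum>k<K. real k * pmf P k)"
  have H1: "H > 1" using HK by (simp add: H_def)
  have K0: "K > 0" using HK by (cases K) auto
  define s where "s = root K (1 / H)"
  have s0: "0 < s" using H1 K0 by (simp add: s_def)
  have s1: "s < 1" using H1 K0 by (simp add: s_def)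
  have sK: "s ^ K = 1 / H" using H1 K0 by (simp add: s_def real_root_pow_pos)
  have sum1: "summable (\<lambda>k. pmf P k)" by (rule pmf_summable)
  have sum2: "summable (\<lambda>k. pmf P k * s^k)" using s0 s1 by (intro pgf_summable) simp
  have "1 - pgf P s = (\<Sum>k. pmf P k - pmf P k * s^k)"
    unfolding pgf_def pmf_suminf[of P, symmetric] by (rule suminf_diff[OF sum1 sum2])
  also have "\<dots> \<ge> (\<Sum>k<K. pmf P k - pmf P k * s^k)"
    using s0 s1 by (intro sum_le_suminf summable_diff sum1 sum2)
       (auto simp: algebra_simps intro!: mult_left_le_one_le power_le_one)
  also have "(\<Sum>k<K. pmf P k - pmf P k * s^k) = (\<Sum>k<K. pmf P k * ((1 - s) * (\<Sum>j<k. s^j)))"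
    by (intro sum.cong refl, subst one_diff_power_eq[symmetric]) (simp add: right_diff_distrib)
  also have "\<dots> \<ge> (\<Sum>k<K. pmf P k * ((1 - s) * (real k * s^K)))"
  proof (intro sum_mono mult_left_mono)
    fix k assume k: "k \<in> {..<K}"
    have "(\<Sum>j<k. s^K) \<le> (\<Sum>j<k. s^j)"
      using k s0 s1 by (intro sum_mono power_decreasing) auto
    then show "real k * s^K \<le> (\<Sum>j<k. s^j)" by simp
  qed (use s1 in auto)
  also have "(\<Sum>k<K. pmf P k * ((1 - s) * (real k * s^K))) = (1 - s) * s^K * H"
    by (simp add: H_def sum_distrib_left algebra_simps)
  also have "\<dots> = 1 - s" using sK H1 by simp
  finally have "pgf P s \<le> s" by simp
  then show ?thesis using s0 s1 by (intro exI[of _ s]) auto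
qed


lemma summable_powser_abs:
  fixes c :: "nat \<Rightarrow> real"
  assumes "summable (\<lambda>k. \<bar>c k\<bar>)" "\<bar>s\<bar> \<le> 1"
  shows "summable (\<lambda>k. c k * s^k)"
proof (rule summable_comparison_test[OF _ assms(1)])
  show "\<exists>N. \<forall>n\<ge>N. norm (c n * s^n) \<le> \<bar>c n\<bar>"
    using assms(2) by (intro exI[of _ 0] allI impI) (auto simp: abs_mult power_abs intro!: mult_left_le power_le_one)
qed

lemma powser_zero_01:
  fixes c :: "nat \<Rightarrow> real"
  assumes sc: "summable (\<lambda>k. \<bar>c k\<bar>)"
    and z: "\<And>s. 0 < s \<Longrightarrow> s \<le> 1 \<Longrightarrow> (\<Sum>k. c k * s^k) = 0"
  shows "c n = 0"
proof (induction n rule: less_induct)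
  case (less n)
  define g where "g = (\<lambda>s. \<Sum>m. c (m + n) * s^m)"
  have scn: "summable (\<lambda>m. \<bar>c (m + n)\<bar>)"
    using summable_ignore_initial_segment[OF sc, of n] by simp
  have g0: "g s = 0" if s: "0 < s" "s \<le> 1" for s
  proof -
    have sum: "summable (\<lambda>k. c k * s^k)" using s by (intro summable_powser_abs[OF sc]) auto
    have sumn: "summable (\<lambda>m. c (m + n) * s^m)" using s by (intro summable_powser_abs[OF scn]) auto
    have "0 = (\<Sum>k. c k * s^k)" using z[OF s] by simp
    also have "\<dots> = (\<Sum>m. c (m + n) * s^(m + n)) + (\<Sum>i<n. c i * s^i)"
      by (rule suminf_split_initial_segment[OF sum])
    also have "(\<Sum>i<n. c i * s^i) = 0" using less.IH by simp
    also have "(\<Sum>m. c (m + n) * s^(m + n)) = s^n * g s"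
      unfolding g_def using sumn by (subst suminf_mult[symmetric]) (auto simp: power_add mult_ac)
    finally have "s^n * g s = 0" by simp
    then show ?thesis using s by simp
  qed
  have cont: "isCont g 0"
    unfolding g_def by (rule isCont_powser[of _ 1]) (use summable_rabs_cancel[OF scn] in simp_all)
  have "(\<lambda>j. g (inverse (real (Suc j)))) \<longlonglongrightarrow> g 0"
    by (rule isCont_tendsto_compose[OF cont LIMSEQ_inverse_real_of_nat])
  moreover have "(\<lambda>j. g (inverse (real (Suc j)))) = (\<lambda>j. 0)"
    by (intro ext g0) (auto simp: field_simps)
  ultimately have "g 0 = 0" using LIMSEQ_unique tendsto_const by metis
  then show ?case by (simp add: g_def)
qed

lemma powser_eq_01:
  fixes a b :: "nat \<Rightarrow> real"
  assumes sa: "summable (\<lambda>k. \<bar>a k\<bar>)" and sb: "summable (\<lambda>k. \<bar>b k\<bar>)"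
    and eq: "\<And>s. 0 \<le> s \<Longrightarrow> s \<le> 1 \<Longrightarrow> (\<Sum>k. a k * s^k) = (\<Sum>k. b k * s^k)"
  shows "a n = b n"
proof -
  have sc: "summable (\<lambda>k. \<bar>a k - b k\<bar>)"
    by (rule summable_comparison_test[OF _ summable_add[OF sa sb]]) (auto intro: abs_triangle_ineq4)
  have "(\<lambda>k. a k - b k) n = 0"
  proof (rule powser_zero_01[OF sc])
    fix s :: real assume s: "0 < s" "s \<le> 1"
    have "(\<Sum>k. a k * s^k) - (\<Sum>k. b k * s^k) = (\<Sum>k. a k * s^k - b k * s^k)"
      using s by (intro suminf_diff summable_powser_abs[OF sa] summable_powser_abs[OF sb]) auto
    then have "(\<Sum>k. (a k - b k) * s^k) = (\<Sum>k. a k * s^k) - (\<Sum>k. b k * s^k)"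
      by (simp add: left_diff_distrib)
    then show "(\<Sum>k. (a k - b k) * s^k) = 0" using eq[of s] s by simp
  qed
  then show ?thesis by simp
qed

lemma termwise_q: 
  fixes q :: real assumes "0 \<le> q" "q \<le> 1"
  shows "real k * q^k * (1 - q) \<le> q * (1 - q^k)"
proof -
  have "q * (1 - q^k) = q * ((1 - q) * (\<Sum>j<k. q^j))" by (simp only: one_diff_power_eq)
  also have "\<dots> = (1 - q) * (\<Sum>j<k. q^Suc j)"
    by (simp only: sum_distrib_left power_Suc mult.left_commute)
  also have "\<dots> \<ge> (1 - q) * (\<Sum>j<k. q^k)"
    using assms by (intro mult_left_mono sum_mono power_decreasing) auto
  finally show ?thesis by (simp add: algebra_simps)
qed

lemma mR_sums:
  assumes "(\<lambda>k. real k * pmf R k) sums D"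
  shows "mR R = ennreal D"
proof -
  have "mR R = (\<Sum>k. ennreal (real k * pmf R k))"
    unfolding mR_def nn_integral_measure_pmf nn_integral_count_space_nat
  proof (intro suminf_cong)
    fix n
    have "ennreal (real n * pmf R n) = ennreal (real n) * ennreal (pmf R n)" by (rule ennreal_mult) auto
    then show "ennreal (pmf R n) * of_nat n = ennreal (real n * pmf R n)"
      by (simp only: ennreal_of_nat_eq_real_of_nat mult.commute)
  qed
  also have "\<dots> = ennreal D" by (rule suminf_ennreal_eq[OF _ assms]) simp
  finally show ?thesis .
qed

lemma vR_summable:
  assumes "summable (\<lambda>k. real (k * (k - 1)) * pmf R k)"
  shows "vR R < \<top>"
proof -
  have "vR R = (\<Sum>k. ennreal (real (k * (k - 1)) * pmf R k))"
    unfolding vR_def nn_integral_measure_pmf nn_integral_count_space_nat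
  proof (intro suminf_cong)
    fix n
    have "ennreal (real (n * (n - 1)) * pmf R n) = ennreal (real (n * (n - 1))) * ennreal (pmf R n)" by (rule ennreal_mult) auto
    then show "ennreal (pmf R n) * of_nat (n * (n - 1)) = ennreal (real (n * (n - 1)) * pmf R n)"
      by (simp only: ennreal_of_nat_eq_real_of_nat mult.commute)
  qed
  also have "\<dots> \<noteq> \<top>" by (rule ennreal_suminf_neq_top[OF assms]) simp
  finally show ?thesis by (simp only: less_top)
qed

theorem lemma2p1:
  fixes P R :: "nat pmf" and \<beta> :: real
  assumes p0: "pmf P 0 > 0"
    and mean_finite: "summable (\<lambda>k. real k * pmf P k)"
    and supercrit: "offspring_mean P > 1"
    and beta_lower: "1 / offspring_mean P < \<beta>"
    and beta_upper: "\<beta> < 1 / sqrt (deriv (pgf P) (extinction_prob P))"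
    and R_gf: "\<forall>s\<in>{0..1}. pgf R s = pgf P (extinction_prob P * s) / extinction_prob P"
  shows "(\<integral>\<^sup>+ N. return_time_second_moment \<beta> N \<partial>gw_measure R) < \<top>"
proof -
  define q where "q = extinction_prob P"
  have q0: "q \<ge> 0" by (simp add: q_def extinction_prob_def)
  obtain s where s: "0 \<le> s" "s < 1" "pgf P s \<le> s" using exists_s[OF mean_finite supercrit] by blast
  have q1: "q < 1" using extinction_le[OF s(1) _ s(3)] s(2) by (simp add: q_def)
  have pgf1: "pgf Q 1 = 1" for Q by (simp add: pgf_def pmf_suminf)
  have "1 = pgf P q / q" using R_gf[rule_format, of 1] pgf1[of R] by (simp add: q_def)
  then have qne: "q \<noteq> 0" and fq: "pgf P q = q" by (auto split: if_splits)
  have qpos: "q > 0" using q0 qne by simp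
  have b0: "\<beta> > 0"
  proof -
    have "offspring_mean P > 0" using supercrit by simp
    then show ?thesis using beta_lower by (smt (verit) divide_pos_pos)
  qed
  have coef: "pmf R k = pmf P k * q^k / q" for k
  proof (rule powser_eq_01[where a="\<lambda>k. pmf R k" and b="\<lambda>k. pmf P k * q^k / q"])
    show "summable (\<lambda>k. \<bar>pmf R k\<bar>)" using pmf_summable by simp
    show "summable (\<lambda>k. \<bar>pmf P k * q^k / q\<bar>)"
    proof (rule summable_comparison_test[OF _ summable_divide[OF pmf_summable[of P], of q]])
      show "\<exists>N. \<forall>n\<ge>N. norm (\<bar>pmf P n * q^n / q\<bar>) \<le> pmf P n / q"
      proof (intro exI[of _ 0] allI impI)
        fix n :: nat
        have "pmf P n * q^n \<le> pmf P n" using q0 q1 by (intro mult_left_le power_le_one) auto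
        then show "norm (\<bar>pmf P n * q^n / q\<bar>) \<le> pmf P n / q"
          using q0 qpos by (simp add: abs_mult divide_right_mono)
      qed
    qed
    fix x :: real assume x: "0 \<le> x" "x \<le> 1"
    have "(\<Sum>k. pmf R k * x^k) = pgf R x" by (simp add: pgf_def)
    also have "\<dots> = pgf P (q * x) / q" using R_gf x by (simp add: q_def)
    also have "\<dots> = (\<Sum>k. pmf P k * (q * x)^k / q)" unfolding pgf_def
      using x q0 q1 by (intro suminf_divide[symmetric] pgf_summable) (auto simp: abs_mult intro: mult_le_one)
    also have "\<dots> = (\<Sum>k. pmf P k * q^k / q * x^k)" by (simp add: power_mult_distrib mult_ac)
    finally show "(\<Sum>k. pmf R k * x^k) = (\<Sum>k. pmf P k * q^k / q * x^k)" .
  qed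
  have sumP1: "summable (\<lambda>n. pmf P n * 1^n)" using pmf_summable by simp
  have Dder: "DERIV (\<lambda>x. \<Sum>n. pmf P n * x^n) q :> (\<Sum>n. diffs (\<lambda>n. pmf P n) n * q^n)"
    by (rule termdiffs_strong[OF sumP1]) (use q0 q1 in simp)
  define D where "D = (\<Sum>n. diffs (\<lambda>n. pmf P n) n * q^n)"
  have pgfeq: "pgf P = (\<lambda>x. \<Sum>n. pmf P n * x^n)" by (rule ext) (simp add: pgf_def)
  have derivD: "deriv (pgf P) q = D" using DERIV_imp_deriv[OF Dder] by (simp add: pgfeq D_def)
  have sumD: "summable (\<lambda>n. diffs (\<lambda>n. pmf P n) n * q^n)"
    by (rule termdiff_converges[of q 1]) (use q0 q1 in \<open>auto intro!: pgf_summable\<close>)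
  define f where "f = (\<lambda>k. real k * pmf P k * q^k)"
  have "(\<lambda>n. diffs (\<lambda>n. pmf P n) n * q^n * q) sums (D * q)"
    using sumD unfolding D_def by (intro sums_mult2 summable_sums)
  then have "(\<lambda>n. f (Suc n)) sums (D * q)" by (simp add: f_def diffs_def mult_ac)
  then have "f sums (D * q)" using sums_Suc[of f "D * q"] by (simp add: f_def)
  then have fs: "(\<lambda>k. f k / q) sums D" using sums_divide[of f "D * q" q] qne by simp
  have mRs: "(\<lambda>k. real k * pmf R k) sums D" using fs by (simp add: coef f_def mult.assoc)
  have mRD: "mR R = ennreal D" by (rule mR_sums[OF mRs])
  have D0: "D \<ge> 0" unfolding sums_unique[OF mRs] by (rule suminf_nonneg[OF sums_summable[OF mRs]]) simp
  have s1: "(\<lambda>k. f k * (1 - q)) sums (D * q * (1 - q))"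
    using \<open>f sums (D * q)\<close> by (rule sums_mult2)
  have "(\<lambda>k. pmf P k - pmf P k * q^k) sums (1 - q)"
  proof (rule sums_diff)
    show "(\<lambda>k. pmf P k) sums 1" using pmf_suminf[of P] pmf_summable[of P] by (metis summable_sums)
    show "(\<lambda>k. pmf P k * q^k) sums q"
      using fq pgf_summable[of q P] q0 q1 unfolding pgf_def by (metis summable_sums abs_of_nonneg less_imp_le)
  qed
  then have s2: "(\<lambda>k. q * (pmf P k - pmf P k * q^k)) sums (q * (1 - q))" by (rule sums_mult)
  have "D * q * (1 - q) \<le> q * (1 - q)"
  proof (rule sums_le[OF _ s1 s2])
    fix k
    have "real k * q^k * (1 - q) \<le> q * (1 - q^k)" by (rule termwise_q) (use q0 q1 in auto)
    then have "pmf P k * (real k * q^k * (1 - q)) \<le> pmf P k * (q * (1 - q^k))" by (intro mult_left_mono) auto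
    then show "f k * (1 - q) \<le> q * (pmf P k - pmf P k * q^k)" by (simp add: f_def algebra_simps)
  qed
  then have D1: "D \<le> 1" using qpos q1 by (simp add: mult.assoc)
  define g1 where "g1 = diffs (\<lambda>_. 1::real)"
  have sg0: "summable (\<lambda>n. (1::real) * x^n)" if "norm x < 1" for x :: real
    using that by (simp add: summable_geometric)
  have sg1: "summable (\<lambda>n. g1 n * x^n)" if "norm x < 1" for x :: real
    unfolding g1_def by (rule termdiff_converges[OF that sg0])
  have sg2: "summable (\<lambda>n. diffs g1 n * q^n)"
    by (rule termdiff_converges[of q 1 g1]) (use q0 q1 sg1 in auto)
  have vsum: "summable (\<lambda>k. real (k * (k - 1)) * pmf R k)"
  proof (rule summable_comparison_test[OF _ summable_divide[OF sg2, of q]])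
    show "\<exists>N. \<forall>n\<ge>N. norm (real (n * (n - 1)) * pmf R n) \<le> diffs g1 n * q^n / q"
    proof (intro exI[of _ 0] allI impI)
      fix n :: nat
      have "real (n * (n - 1)) * pmf P n * q^n \<le> diffs g1 n * q^n"
      proof -
        have "real (n * (n - 1)) * pmf P n \<le> diffs g1 n * 1"
        proof (rule mult_mono)
          have "n * (n - 1) \<le> (Suc n) * (Suc (Suc n))" by (intro mult_mono) auto
          then have "real (n * (n - 1)) \<le> real (Suc n) * real (Suc (Suc n))" by (simp only: of_nat_mult[symmetric] of_nat_le_iff)
          then show "real (n * (n - 1)) \<le> diffs g1 n" by (simp add: g1_def diffs_def)
        qed (auto simp: pmf_le_1 g1_def diffs_def)
        then show ?thesis using q0 by (intro mult_right_mono) auto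
      qed
      then show "norm (real (n * (n - 1)) * pmf R n) \<le> diffs g1 n * q^n / q"
        using qpos by (simp add: coef divide_right_mono mult.assoc)
    qed
  qed
  have vfin: "vR R < \<top>" by (rule vR_summable[OF vsum])
  define vr where "vr = enn2real (vR R)"
  have vRe: "vR R = ennreal vr" using vfin by (simp add: vr_def ennreal_enn2real less_top)
  have vr0: "vr \<ge> 0" by (simp add: vr_def)
  have Dpos: "D > 0"
  proof (rule ccontr)
    assume "\<not> D > 0"
    then have "D = 0" using D0 by simp
    then show False using beta_upper b0 derivD by (simp add: q_def)
  qed
  have bsD: "\<beta> * sqrt D < 1" using beta_upper derivD Dpos b0 by (simp add: q_def field_simps)
  have c2: "\<beta>^2 * D < 1"
  proof -
    have "(\<beta> * sqrt D)^2 < 1^2" using bsD b0 Dpos by (intro power_strict_mono) auto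
    then show ?thesis using D0 by (simp add: power_mult_distrib)
  qed
  have c1: "\<beta> * D < 1"
  proof (cases "\<beta> < 1")
    case True
    have "\<beta> * D \<le> \<beta> * 1" using D1 b0 by (intro mult_left_mono) auto
    then show ?thesis using True by simp
  next
    case False
    have "\<beta> * D \<le> \<beta>^2 * D" using False D0 by (intro mult_right_mono) (auto simp: power2_eq_square)
    then show ?thesis using c2 by simp
  qed
  have "(\<integral>\<^sup>+ N. return_time_second_moment \<beta> N \<partial>gw_measure R) \<le> (\<integral>\<^sup>+N. 4 * (Yt \<beta> N)^2 + Kf \<beta> N \<partial>gw_measure R)"
    by (intro nn_integral_mono rtsm_bound b0)
  also have "\<dots> < \<top>"
    by (rule int_final[OF _ mRD D0 vRe vr0 c1 c2]) (use b0 in simp)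
  finally show ?thesis .
qed

end
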